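(* Let $(X,Z,M_1,M_0,Y_1,Y_0)$ be random variables with $X\in\mathbb{X}\subseteq\mathbb{R}^{d_X}$, $Z\in\{0,1\}$, $M_1,M_0,Y_1,Y_0\in\mathbb{R}$; $M=ZM_1+(1-Z)M_0$, $Y=ZY_1+(1-Z)Y_0$, $U=(M_1,M_0)$. Assume (A1) $Z\perp\!\!\!\perp(M_0,M_1,Y_0,Y_1)\mid X$; (A2) $\mathbb{E}(Y_z\mid X,U=u)=\mathbb{E}(Y_z\mid X,M_z=m_z)$ for all $z\in\{0,1\}$, $u=(m_1,m_0)\in\mathbb{R}^2$; (A3) $e_u(x)=c_\rho\{F(M_1=m_1\mid X=x),F(M_0=m_0\mid X=x)\}\prod_{z}f(M_z=m_z\mid X=x)$ for all $x$, $u=(m_1,m_0)$. Given $u^*\in\mathbb{R}^2$, a kernel $\mathcal{K}$ and a bandwidth $h>0$, the local principal causal effect is identified as $$\tau_{u^*}=\frac{\mathbb{E}\Big[\int_{\mathbb{R}^2}\{\mu_1(X,m_1)-\mu_0(X,m_0)\}e_u(X)k_{u^*}(u)\,du\Big]}{\mathbb{E}\Big[\int_{\mathbb{R}^2}e_u(X)k_{u^*}(u)\,du\Big]},$$ where $e_u(X)=c_\rho\{F_{1m_1}(X),F_{0m_0}(X)\}\prod_{z\in\{0,1\}}f_{zm_z}(X)$ for $u=(m_1,m_0)$.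
   Context: $\mu_z(x,m)=\mathbb{E}(Y\mid X=x,Z=z,M=m)$; $e_u(x)=f(U=u\mid X=x)$ (conditional density of $U$ given $X$); $f_{zm}(x)=f(M=m\mid X=x,Z=z)$, $F_{zm}(x)=\mathbb{P}(M\le m\mid X=x,Z=z)$; $c_\rho$ is a specified bivariate copula density with specified parameter $\rho$; $F(M_z=\cdot\mid X=x)$, $f(M_z=\cdot\mid X=x)$ are conditional CDF/density of $M_z$ given $X=x$. For $u^*=(m_1^*,m_0^* )$, $k_{u^*}(u)=h^{-2}\mathcal{K}\{h^{-1}(m_1-m_1^* ),h^{-1}(m_0-m_0^* )\}$, and $\tau_{u^*}=\mathbb{E}[\{\mu_1(X,M_1)-\mu_0(X,M_0)\}k_{u^*}(U)]/\mathbb{E}\{k_{u^*}(U)\}$. *)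

theory Defs
  imports "HOL-Probability.Probability"
begin

definition cond_exp_version ::
  "'a measure \<Rightarrow> ('a \<Rightarrow> 'b::topological_space) \<Rightarrow> ('a \<Rightarrow> real) \<Rightarrow> ('b \<Rightarrow> real) \<Rightarrow> bool" where
  "cond_exp_version P V Y g \<longleftrightarrow>
     V \<in> measurable P borel \<and> g \<in> borel_measurable borel \<and>
     integrable P (\<lambda>\<omega>. g (V \<omega>)) \<and>
     (\<forall>S \<in> sets borel. (\<integral>\<omega>. indicator S (V \<omega>) * Y \<omega> \<partial>P) = (\<integral>\<omega>. indicator S (V \<omega>) * g (V \<omega>) \<partial>P))"

text \<open>f is a version of the conditional (Lebesgue) density of W given V:
  f v w = f(W = w | V = v).\<close>
definition cond_density_version ::
  "'a measure \<Rightarrow> ('a \<Rightarrow> 'b::topological_space) \<Rightarrow> ('a \<Rightarrow> 'w::euclidean_space) \<Rightarrow> ('b \<Rightarrow> 'w \<Rightarrow> real) \<Rightarrow> bool" where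
  "cond_density_version P V W f \<longleftrightarrow>
     V \<in> measurable P borel \<and> W \<in> borel_measurable P \<and>
     (\<lambda>(v, w). f v w) \<in> borel_measurable borel \<and> (\<forall>v w. 0 \<le> f v w) \<and>
     (\<forall>A \<in> sets borel. \<forall>B \<in> sets borel.
        emeasure P {\<omega> \<in> space P. V \<omega> \<in> A \<and> W \<omega> \<in> B} =
        (\<integral>\<^sup>+ v. indicator A v * (\<integral>\<^sup>+ w. indicator B w * ennreal (f v w) \<partial>lborel) \<partial>distr P borel V))"

definition cond_cdf :: "('b \<Rightarrow> real \<Rightarrow> real) \<Rightarrow> 'b \<Rightarrow> real \<Rightarrow> real" where
  "cond_cdf f v m = (\<integral> t. indicator {..m} t * f v t \<partial>lborel)"

definition cond_indep ::
  "'a measure \<Rightarrow> ('a \<Rightarrow> 'x::topological_space) \<Rightarrow> ('a \<Rightarrow> 'z::topological_space) \<Rightarrow> ('a \<Rightarrow> 'w::topological_space) \<Rightarrow> bool" where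
  "cond_indep P X Z W \<longleftrightarrow>
     (\<forall>C \<in> sets (borel :: 'z measure). \<forall>B \<in> sets (borel :: 'w measure).
        AE \<omega> in P.
          real_cond_exp P (vimage_algebra (space P) X borel)
             (\<lambda>\<eta>. indicator C (Z \<eta>) * indicator B (W \<eta>)) \<omega> =
          real_cond_exp P (vimage_algebra (space P) X borel) (\<lambda>\<eta>. indicator C (Z \<eta>)) \<omega> *
          real_cond_exp P (vimage_algebra (space P) X borel) (\<lambda>\<eta>. indicator B (W \<eta>)) \<omega>)"

definition copula_density :: "(real \<Rightarrow> real \<Rightarrow> real) \<Rightarrow> bool" where
  "copula_density c \<longleftrightarrow>
     (\<lambda>(s, t). c s t) \<in> borel_measurable borel \<and> (\<forall>s t. 0 \<le> c s t) \<and>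
     (\<forall>a \<in> {0..1}.
        (\<integral>\<^sup>+ p. indicator ({0..a} \<times> {0..1}) p * ennreal (c (fst p) (snd p)) \<partial>(lborel :: (real \<times> real) measure)) = ennreal a \<and>
        (\<integral>\<^sup>+ p. indicator ({0..1} \<times> {0..a}) p * ennreal (c (fst p) (snd p)) \<partial>(lborel :: (real \<times> real) measure)) = ennreal a)"

definition kernel2 :: "(real \<Rightarrow> real \<Rightarrow> real) \<Rightarrow> bool" where
  "kernel2 K \<longleftrightarrow>
     (\<lambda>(a, b). K a b) \<in> borel_measurable borel \<and> (\<exists>B. \<forall>a b. \<bar>K a b\<bar> \<le> B) \<and>
     integrable (lborel :: (real \<times> real) measure) (\<lambda>p. K (fst p) (snd p)) \<and>
     (\<integral> p. K (fst p) (snd p) \<partial>(lborel :: (real \<times> real) measure)) = 1"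

definition kern_u :: "(real \<Rightarrow> real \<Rightarrow> real) \<Rightarrow> real \<Rightarrow> real \<times> real \<Rightarrow> real \<times> real \<Rightarrow> real" where
  "kern_u K h ustar u = K ((fst u - fst ustar) / h) ((snd u - snd ustar) / h) / h\<^sup>2"

definition copula_e ::
  "(real \<Rightarrow> real \<Rightarrow> real) \<Rightarrow> ('x \<Rightarrow> real \<Rightarrow> real) \<Rightarrow> ('x \<Rightarrow> real \<Rightarrow> real) \<Rightarrow> 'x \<Rightarrow> real \<times> real \<Rightarrow> real" where
  "copula_e c f1 f0 x u = c (cond_cdf f1 x (fst u)) (cond_cdf f0 x (snd u)) * (f1 x (fst u) * f0 x (snd u))"

end

theory Submission
  imports Defs
begin

lemma pair_measure_eq_rect:
  fixes M N :: "('b::second_countable_topology \<times> 'c::second_countable_topology) measure"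
  assumes M: "sets M = sets borel" and N: "sets N = sets borel" and fin: "finite_measure M"
    and eq: "\<And>A B. A \<in> sets borel \<Longrightarrow> B \<in> sets borel \<Longrightarrow> emeasure M (A \<times> B) = emeasure N (A \<times> B)"
  shows "M = N"
proof (rule measure_eqI_generator_eq[OF Int_stable_pair_measure_generator[of "borel::'b measure" "borel::'c measure"]])
  show "{a \<times> b |a b. a \<in> sets borel \<and> b \<in> sets borel} \<subseteq> Pow (space borel \<times> space borel)" by auto
  show "sets M = sigma_sets (space borel \<times> space borel) {a \<times> b |a b. a \<in> sets (borel::'b measure) \<and> b \<in> sets (borel::'c measure)}"
    using M by (simp add: borel_prod[symmetric] sets_pair_measure)
  show "sets N = sigma_sets (space borel \<times> space borel) {a \<times> b |a b. a \<in> sets (borel::'b measure) \<and> b \<in> sets (borel::'c measure)}"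
    using N by (simp add: borel_prod[symmetric] sets_pair_measure)
  show "\<And>X. X \<in> {a \<times> b |a b. a \<in> sets borel \<and> b \<in> sets borel} \<Longrightarrow> emeasure M X = emeasure N X"
    using eq by auto
  show "range (\<lambda>i. UNIV) \<subseteq> {a \<times> b |a b. a \<in> sets (borel::'b measure) \<and> b \<in> sets (borel::'c measure)}"
    by (auto intro!: exI[where x=UNIV])
  show "(\<Union>i. UNIV) = space borel \<times> space borel" by auto
  have "space M = UNIV" using sets_eq_imp_space_eq[OF M] by simp
  then show "\<And>i. emeasure M UNIV \<noteq> \<infinity>" using finite_measure.emeasure_finite[OF fin, of UNIV] by simp
qed


lemma borel_measurable_fst_comp:
  fixes f :: "'a \<Rightarrow> 'b::second_countable_topology \<times> 'c::second_countable_topology"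
  assumes "f \<in> borel_measurable M"
  shows "(\<lambda>x. fst (f x)) \<in> borel_measurable M"
  by (rule measurable_compose[OF assms borel_measurable_continuous_onI]) (intro continuous_intros)

lemma borel_measurable_snd_comp:
  fixes f :: "'a \<Rightarrow> 'b::second_countable_topology \<times> 'c::second_countable_topology"
  assumes "f \<in> borel_measurable M"
  shows "(\<lambda>x. snd (f x)) \<in> borel_measurable M"
  by (rule measurable_compose[OF assms borel_measurable_continuous_onI]) (intro continuous_intros)

lemma borel_measurable_id_prod:
  "(\<lambda>x. x) \<in> borel_measurable (borel :: ('b::second_countable_topology \<times> 'c::second_countable_topology) measure)"
  by simp

lemma sets_pair_borel_lborel:
  "sets (distr P (borel::'b::second_countable_topology measure) V \<Otimes>\<^sub>M (lborel::'w::euclidean_space measure)) = sets (borel :: ('b \<times> 'w) measure)"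
  by (metis borel_prod sets_distr sets_lborel sets_pair_measure_cong)

lemma cond_density_distr:
  fixes V :: "'a \<Rightarrow> 'b::second_countable_topology" and W :: "'a \<Rightarrow> 'w::euclidean_space"
  assumes P: "prob_space P" and cd: "cond_density_version P V W f"
  shows "distr P borel (\<lambda>\<omega>. (V \<omega>, W \<omega>)) = density (distr P borel V \<Otimes>\<^sub>M lborel) (\<lambda>p. ennreal (f (fst p) (snd p)))"
proof (rule pair_measure_eq_rect)
  interpret prob_space P by fact
  have Vm[measurable]: "V \<in> measurable P borel" and Wm[measurable]: "W \<in> borel_measurable P"
    and fm: "(\<lambda>(v, w). f v w) \<in> borel_measurable borel" and fnn: "\<And>v w. 0 \<le> f v w"
    and eq: "\<And>A B. A \<in> sets borel \<Longrightarrow> B \<in> sets borel \<Longrightarrow> emeasure P {\<omega> \<in> space P. V \<omega> \<in> A \<and> W \<omega> \<in> B} =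
        (\<integral>\<^sup>+ v. indicator A v * (\<integral>\<^sup>+ w. indicator B w * ennreal (f v w) \<partial>lborel) \<partial>distr P borel V)"
    using cd unfolding cond_density_version_def by auto
  let ?L = "distr P borel V"
  interpret L: prob_space ?L by (rule prob_space_distr) simp
  interpret PS: pair_sigma_finite ?L lborel ..
  have S: "sets (?L \<Otimes>\<^sub>M lborel) = sets (borel :: ('b \<times> 'w) measure)" by (rule sets_pair_borel_lborel)
  have fr: "(\<lambda>p. f (fst p) (snd p)) \<in> borel_measurable (?L \<Otimes>\<^sub>M lborel)"
    by (subst measurable_cong_sets[OF S refl]) (use fm in \<open>simp add: case_prod_beta'\<close>)
  then have fm': "(\<lambda>p. ennreal (f (fst p) (snd p))) \<in> borel_measurable (?L \<Otimes>\<^sub>M lborel)"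
    by measurable
  show "sets (distr P borel (\<lambda>\<omega>. (V \<omega>, W \<omega>))) = sets borel" by simp
  show "sets (density (?L \<Otimes>\<^sub>M lborel) (\<lambda>p. ennreal (f (fst p) (snd p)))) = sets borel" using S by simp
  show "finite_measure (distr P borel (\<lambda>\<omega>. (V \<omega>, W \<omega>)))"
  proof -
    interpret Q: prob_space "distr P borel (\<lambda>\<omega>. (V \<omega>, W \<omega>))" by (rule prob_space_distr) simp
    show ?thesis by (rule Q.finite_measure_axioms)
  qed
  fix A :: "'b set" and B :: "'w set" assume A[measurable]: "A \<in> sets borel" and B[measurable]: "B \<in> sets borel"
  have AB[measurable]: "A \<times> B \<in> sets (borel::('b\<times>'w) measure)"
    by (metis borel_prod pair_measureI A B)
  have ABL: "A \<times> B \<in> sets (?L \<Otimes>\<^sub>M lborel)" using A B by (intro pair_measureI) simp_all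
  have "emeasure (distr P borel (\<lambda>\<omega>. (V \<omega>, W \<omega>))) (A \<times> B) = emeasure P {\<omega> \<in> space P. V \<omega> \<in> A \<and> W \<omega> \<in> B}"
    by (subst emeasure_distr) (auto intro!: arg_cong[where f="emeasure P"])
  also have "\<dots> = (\<integral>\<^sup>+ v. indicator A v * (\<integral>\<^sup>+ w. indicator B w * ennreal (f v w) \<partial>lborel) \<partial>?L)"
    using eq A B by simp
  also have "\<dots> = (\<integral>\<^sup>+ v. (\<integral>\<^sup>+ w. ennreal (f (fst (v,w)) (snd (v,w))) * indicator (A \<times> B) (v,w) \<partial>lborel) \<partial>?L)"
  proof (intro nn_integral_cong)
    fix v
    have "(\<lambda>w. (\<lambda>(v, w). f v w) (v, w)) \<in> borel_measurable borel"
      by (rule measurable_Pair2[OF fm[unfolded borel_prod[symmetric]]]) simp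
    then have fx: "(\<lambda>w. indicator B w * ennreal (f v w)) \<in> borel_measurable lborel"
      by (subst measurable_cong_sets[OF sets_lborel refl]) simp
    show "indicator A v * (\<integral>\<^sup>+ w. indicator B w * ennreal (f v w) \<partial>lborel) =
      (\<integral>\<^sup>+ w. ennreal (f (fst (v,w)) (snd (v,w))) * indicator (A \<times> B) (v,w) \<partial>lborel)"
      by (subst nn_integral_cmult[symmetric, OF fx]) (simp add: indicator_times mult_ac)
  qed
  also have "\<dots> = (\<integral>\<^sup>+ p. ennreal (f (fst p) (snd p)) * indicator (A \<times> B) p \<partial>(?L \<Otimes>\<^sub>M lborel))"
  proof (rule lborel.nn_integral_fst)
    show "(\<lambda>p. ennreal (f (fst p) (snd p)) * indicator (A \<times> B) p) \<in> borel_measurable (?L \<Otimes>\<^sub>M lborel)"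
      by (intro borel_measurable_times_ennreal fm' borel_measurable_indicator ABL)
  qed
  also have "\<dots> = emeasure (density (?L \<Otimes>\<^sub>M lborel) (\<lambda>p. ennreal (f (fst p) (snd p)))) (A \<times> B)"
    by (rule emeasure_density[symmetric]) (rule fm', rule ABL)
  finally show "emeasure (distr P borel (\<lambda>\<omega>. (V \<omega>, W \<omega>))) (A \<times> B) =
     emeasure (density (?L \<Otimes>\<^sub>M lborel) (\<lambda>p. ennreal (f (fst p) (snd p)))) (A \<times> B)" .
qed

lemma cond_density_integral:
  fixes V :: "'a \<Rightarrow> 'b::second_countable_topology" and W :: "'a \<Rightarrow> 'w::euclidean_space"
    and F :: "'b \<times> 'w \<Rightarrow> real"
  assumes P: "prob_space P" and cd: "cond_density_version P V W f"
    and Fm: "F \<in> borel_measurable borel"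
    and int: "integrable P (\<lambda>\<omega>. F (V \<omega>, W \<omega>))"
  shows "(\<integral>\<omega>. F (V \<omega>, W \<omega>) \<partial>P) = (\<integral>\<omega>. (\<integral>w. f (V \<omega>) w * F (V \<omega>, w) \<partial>lborel) \<partial>P)"
proof -
  interpret prob_space P by fact
  have Vm[measurable]: "V \<in> measurable P borel" and Wm[measurable]: "W \<in> borel_measurable P"
    and fm[measurable]: "(\<lambda>(v, w). f v w) \<in> borel_measurable borel" and fnn: "\<And>v w. 0 \<le> f v w"
    using cd unfolding cond_density_version_def by auto
  let ?L = "distr P borel V"
  interpret L: prob_space ?L by (rule prob_space_distr) simp
  interpret PS: pair_sigma_finite ?L lborel ..
  have S: "sets (?L \<Otimes>\<^sub>M lborel) = sets (borel :: ('b \<times> 'w) measure)" by (rule sets_pair_borel_lborel)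
  have fr: "(\<lambda>p. f (fst p) (snd p)) \<in> borel_measurable (?L \<Otimes>\<^sub>M lborel)"
    by (subst measurable_cong_sets[OF S refl]) (use fm in \<open>simp add: case_prod_beta'\<close>)
  have Fr: "F \<in> borel_measurable (?L \<Otimes>\<^sub>M lborel)"
    by (subst measurable_cong_sets[OF S refl]) (rule Fm)
  have D: "distr P borel (\<lambda>\<omega>. (V \<omega>, W \<omega>)) = density (?L \<Otimes>\<^sub>M lborel) (\<lambda>p. ennreal (f (fst p) (snd p)))"
    by (rule cond_density_distr[OF P cd])
  have "integrable (distr P borel (\<lambda>\<omega>. (V \<omega>, W \<omega>))) F"
    using int by (subst integrable_distr_eq) (simp_all add: Fm)
  then have i2: "integrable (?L \<Otimes>\<^sub>M lborel) (\<lambda>p. f (fst p) (snd p) * F p)"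
    unfolding D by (subst (asm) integrable_density) (simp_all add: fr Fr fnn)
  have "(\<integral>\<omega>. F (V \<omega>, W \<omega>) \<partial>P) = integral\<^sup>L (distr P borel (\<lambda>\<omega>. (V \<omega>, W \<omega>))) F"
    by (rule integral_distr[symmetric]) (simp_all add: Fm)
  also have "\<dots> = integral\<^sup>L (?L \<Otimes>\<^sub>M lborel) (\<lambda>p. f (fst p) (snd p) * F p)"
    unfolding D by (subst integral_density) (simp_all add: fr Fr fnn)
  also have "\<dots> = (\<integral>v. (\<integral>w. f (fst (v,w)) (snd (v,w)) * F (v,w) \<partial>lborel) \<partial>?L)"
    by (rule PS.integral_fst'[symmetric, OF i2])
  also have "\<dots> = (\<integral>\<omega>. (\<integral>w. f (V \<omega>) w * F (V \<omega>, w) \<partial>lborel) \<partial>P)"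
  proof (subst integral_distr)
    have "(\<lambda>p. f (fst p) (snd p) * F p) \<in> borel_measurable (?L \<Otimes>\<^sub>M lborel)" using fr Fr by simp
    then have "case_prod (\<lambda>v w. f v w * F (v,w)) \<in> borel_measurable (borel \<Otimes>\<^sub>M lborel)"
      by (subst measurable_cong_sets[where M'="?L \<Otimes>\<^sub>M lborel", OF sets_pair_measure_cong refl]) (simp_all add: case_prod_beta')
    then show "(\<lambda>v. \<integral>w. f (fst (v,w)) (snd (v,w)) * F (v,w) \<partial>lborel) \<in> borel_measurable borel"
      using lborel.borel_measurable_lebesgue_integral[of "\<lambda>v w. f v w * F (v,w)" borel] by simp
  qed simp_all
  finally show ?thesis .
qed

lemma weighted_law_eq:
  fixes X :: "'a \<Rightarrow> 'b::second_countable_topology" and W :: "'a \<Rightarrow> 'c::second_countable_topology"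
    and a b :: "'a \<Rightarrow> real"
  assumes P: "prob_space P" and Xm[measurable]: "X \<in> measurable P borel" and Wm[measurable]: "W \<in> measurable P borel"
    and ai: "integrable P a" and bi: "integrable P b"
    and a0: "AE \<omega> in P. 0 \<le> a \<omega>" and b0: "AE \<omega> in P. 0 \<le> b \<omega>"
    and eq: "\<And>A B. A \<in> sets borel \<Longrightarrow> B \<in> sets borel \<Longrightarrow>
       (\<integral>\<omega>. a \<omega> * (indicator A (X \<omega>) * indicator B (W \<omega>)) \<partial>P) = (\<integral>\<omega>. b \<omega> * (indicator A (X \<omega>) * indicator B (W \<omega>)) \<partial>P)"
  shows "distr (density P (\<lambda>\<omega>. ennreal (a \<omega>))) borel (\<lambda>\<omega>. (X \<omega>, W \<omega>)) =
         distr (density P (\<lambda>\<omega>. ennreal (b \<omega>))) borel (\<lambda>\<omega>. (X \<omega>, W \<omega>))"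
proof -
  interpret prob_space P by fact
  have am[measurable]: "a \<in> borel_measurable P" using ai by auto
  have bm[measurable]: "b \<in> borel_measurable P" using bi by auto
  have rect: "emeasure (distr (density P (\<lambda>\<omega>. ennreal (c \<omega>))) borel (\<lambda>\<omega>. (X \<omega>, W \<omega>))) (A \<times> B) =
      ennreal (\<integral>\<omega>. c \<omega> * (indicator A (X \<omega>) * indicator B (W \<omega>)) \<partial>P)"
    if ci: "integrable P c" and c0: "AE \<omega> in P. 0 \<le> c \<omega>" and A[measurable]: "A \<in> sets borel" and B[measurable]: "B \<in> sets borel" for c A B
  proof -
    have cm[measurable]: "c \<in> borel_measurable P" using ci by auto
    have AB[measurable]: "A \<times> B \<in> sets (borel::('b\<times>'c) measure)"
      by (metis borel_prod pair_measureI A B)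
    have ci2: "integrable P (\<lambda>\<omega>. c \<omega> * (indicator A (X \<omega>) * indicator B (W \<omega>)))"
      by (rule Bochner_Integration.integrable_bound[OF ci]) (auto simp: indicator_def)
    have "emeasure (distr (density P (\<lambda>\<omega>. ennreal (c \<omega>))) borel (\<lambda>\<omega>. (X \<omega>, W \<omega>))) (A \<times> B) =
        emeasure (density P (\<lambda>\<omega>. ennreal (c \<omega>))) ((\<lambda>\<omega>. (X \<omega>, W \<omega>)) -` (A \<times> B) \<inter> space P)"
      by (subst emeasure_distr) simp_all
    also have "\<dots> = (\<integral>\<^sup>+ \<omega>. ennreal (c \<omega>) * indicator ((\<lambda>\<omega>. (X \<omega>, W \<omega>)) -` (A \<times> B) \<inter> space P) \<omega> \<partial>P)"
      by (subst emeasure_density) simp_all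
    also have "\<dots> = (\<integral>\<^sup>+ \<omega>. ennreal (c \<omega> * (indicator A (X \<omega>) * indicator B (W \<omega>))) \<partial>P)"
      by (intro nn_integral_cong) (auto simp: indicator_def)
    also have "\<dots> = ennreal (\<integral>\<omega>. c \<omega> * (indicator A (X \<omega>) * indicator B (W \<omega>)) \<partial>P)"
      by (rule nn_integral_eq_integral[OF ci2]) (use c0 in \<open>auto simp: indicator_def\<close>)
    finally show ?thesis .
  qed
  show ?thesis
  proof (rule pair_measure_eq_rect)
    show "finite_measure (distr (density P (\<lambda>\<omega>. ennreal (a \<omega>))) borel (\<lambda>\<omega>. (X \<omega>, W \<omega>)))"
    proof
      have "emeasure (distr (density P (\<lambda>\<omega>. ennreal (a \<omega>))) borel (\<lambda>\<omega>. (X \<omega>, W \<omega>))) (UNIV \<times> UNIV) \<noteq> \<infinity>"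
        by (subst rect[OF ai a0]) simp_all
      then show "emeasure (distr (density P (\<lambda>\<omega>. ennreal (a \<omega>))) borel (\<lambda>\<omega>. (X \<omega>, W \<omega>)))
        (space (distr (density P (\<lambda>\<omega>. ennreal (a \<omega>))) borel (\<lambda>\<omega>. (X \<omega>, W \<omega>)))) \<noteq> \<infinity>" by simp
    qed
    fix A :: "'b set" and B :: "'c set" assume "A \<in> sets borel" "B \<in> sets borel"
    then show "emeasure (distr (density P (\<lambda>\<omega>. ennreal (a \<omega>))) borel (\<lambda>\<omega>. (X \<omega>, W \<omega>))) (A \<times> B) =
      emeasure (distr (density P (\<lambda>\<omega>. ennreal (b \<omega>))) borel (\<lambda>\<omega>. (X \<omega>, W \<omega>))) (A \<times> B)"
      using rect[OF ai a0] rect[OF bi b0] eq by simp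
  qed simp_all
qed

lemma weighted_law_integral:
  fixes X :: "'a \<Rightarrow> 'b::second_countable_topology" and W :: "'a \<Rightarrow> 'c::second_countable_topology"
    and a b :: "'a \<Rightarrow> real" and h :: "'b \<times> 'c \<Rightarrow> real"
  assumes D: "distr (density P (\<lambda>\<omega>. ennreal (a \<omega>))) borel (\<lambda>\<omega>. (X \<omega>, W \<omega>)) =
         distr (density P (\<lambda>\<omega>. ennreal (b \<omega>))) borel (\<lambda>\<omega>. (X \<omega>, W \<omega>))"
    and Xm[measurable]: "X \<in> measurable P borel" and Wm[measurable]: "W \<in> measurable P borel"
    and am[measurable]: "a \<in> borel_measurable P" and bm[measurable]: "b \<in> borel_measurable P"
    and a0: "AE \<omega> in P. 0 \<le> a \<omega>" and b0: "AE \<omega> in P. 0 \<le> b \<omega>"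
    and hm[measurable]: "h \<in> borel_measurable borel"
  shows "(\<integral>\<omega>. a \<omega> * h (X \<omega>, W \<omega>) \<partial>P) = (\<integral>\<omega>. b \<omega> * h (X \<omega>, W \<omega>) \<partial>P)"
    and "integrable P (\<lambda>\<omega>. a \<omega> * h (X \<omega>, W \<omega>)) \<longleftrightarrow> integrable P (\<lambda>\<omega>. b \<omega> * h (X \<omega>, W \<omega>))"
proof -
  have I: "integral\<^sup>L (distr (density P (\<lambda>\<omega>. ennreal (c \<omega>))) borel (\<lambda>\<omega>. (X \<omega>, W \<omega>))) h = (\<integral>\<omega>. c \<omega> * h (X \<omega>, W \<omega>) \<partial>P)"
    if [measurable]: "c \<in> borel_measurable P" and "AE \<omega> in P. 0 \<le> c \<omega>" for c
    by (subst integral_distr) (simp_all add: integral_density that)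
  have J: "integrable (distr (density P (\<lambda>\<omega>. ennreal (c \<omega>))) borel (\<lambda>\<omega>. (X \<omega>, W \<omega>))) h \<longleftrightarrow> integrable P (\<lambda>\<omega>. c \<omega> * h (X \<omega>, W \<omega>))"
    if [measurable]: "c \<in> borel_measurable P" and "AE \<omega> in P. 0 \<le> c \<omega>" for c
    by (subst integrable_distr_eq) (simp_all add: integrable_density that)
  show "(\<integral>\<omega>. a \<omega> * h (X \<omega>, W \<omega>) \<partial>P) = (\<integral>\<omega>. b \<omega> * h (X \<omega>, W \<omega>) \<partial>P)"
    using I[OF am a0] I[OF bm b0] D by simp
  show "integrable P (\<lambda>\<omega>. a \<omega> * h (X \<omega>, W \<omega>)) \<longleftrightarrow> integrable P (\<lambda>\<omega>. b \<omega> * h (X \<omega>, W \<omega>))"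
    using J[OF am a0] J[OF bm b0] D by simp
qed

lemma subalg_vimage:
  assumes "prob_space P" and "X \<in> measurable P (borel :: 'b::topological_space measure)"
  shows "finite_measure_subalgebra P (vimage_algebra (space P) X borel)"
proof -
  interpret prob_space P by fact
  show ?thesis
    by unfold_locales (auto simp: subalgebra_def intro!: sets_image_in_sets[OF refl assms(2)])
qed

lemma meas_vimage_comp:
  assumes "g \<in> borel_measurable (borel :: 'b::topological_space measure)"
  shows "(\<lambda>\<omega>. g (X \<omega>)) \<in> borel_measurable (vimage_algebra \<Omega> X (borel :: 'b measure))"
  by (rule measurable_compose[OF measurable_vimage_algebra1 assms]) simp

lemma q_exists:
  fixes X :: "'a \<Rightarrow> 'b::second_countable_topology"
  assumes P: "prob_space P" and Xm[measurable]: "X \<in> measurable P borel" and Zm[measurable]: "Z \<in> borel_measurable P"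
    and Zb: "\<forall>\<omega> \<in> space P. Z \<omega> \<in> {0, 1}"
  shows "\<exists>q. q \<in> borel_measurable borel \<and> (\<forall>x. 0 \<le> q x) \<and> integrable P (\<lambda>\<omega>. q (X \<omega>)) \<and>
     (AE \<omega> in P. real_cond_exp P (vimage_algebra (space P) X borel) Z \<omega> = q (X \<omega>))"
proof -
  interpret prob_space P by fact
  interpret S: finite_measure_subalgebra P "vimage_algebra (space P) X borel"
    by (rule subalg_vimage[OF P Xm])
  let ?L = "distr P borel X"
  let ?N = "distr (density P (\<lambda>\<omega>. ennreal (Z \<omega>))) borel X"
  interpret L: prob_space ?L by (rule prob_space_distr) simp
  have Z0: "\<And>\<omega>. \<omega> \<in> space P \<Longrightarrow> 0 \<le> Z \<omega> \<and> Z \<omega> \<le> 1" using Zb by auto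
  have Zi: "integrable P Z"
    by (rule integrable_const_bound[where B=1]) (use Z0 in auto)
  have ac: "absolutely_continuous ?L ?N"
    unfolding absolutely_continuous_def
  proof
    fix A assume "A \<in> null_sets ?L"
    then have A: "A \<in> sets borel" and A0: "emeasure P (X -` A \<inter> space P) = 0"
      by (auto simp: null_sets_def emeasure_distr)
    have "X -` A \<inter> space P \<in> sets P" using A by measurable
    then have "emeasure (density P (\<lambda>\<omega>. ennreal (Z \<omega>))) (X -` A \<inter> space P) = 0"
      using absolutely_continuousD[OF absolutely_continuousI_density[of "\<lambda>\<omega>. ennreal (Z \<omega>)" P]] A0 by simp
    then show "A \<in> null_sets ?N" using A by (simp add: null_sets_def emeasure_distr)
  qed
  have sN: "sets ?N = sets ?L" by simp
  have Nfin: "finite_measure ?N"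
  proof
    have "emeasure ?N (space ?N) = (\<integral>\<^sup>+ \<omega>. ennreal (Z \<omega>) * indicator (space P) \<omega> \<partial>P)"
      by (simp add: emeasure_distr emeasure_density)
    also have "\<dots> \<le> (\<integral>\<^sup>+ \<omega>. 1 \<partial>P)"
      by (intro nn_integral_mono) (use Z0 in \<open>auto simp: indicator_def\<close>)
    also have "\<dots> < \<infinity>" by (simp add: emeasure_space_1)
    finally show "emeasure ?N (space ?N) \<noteq> \<infinity>" by simp
  qed
  then interpret N: finite_measure ?N .
  define r where "r = RN_deriv ?L ?N"
  define q where "q = (\<lambda>x. enn2real (r x))"
  have rm: "r \<in> borel_measurable ?L" unfolding r_def by (rule borel_measurable_RN_deriv)
  then have qm[measurable]: "q \<in> borel_measurable borel" unfolding q_def by simp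
  have dr: "density ?L r = ?N" unfolding r_def by (rule L.density_RN_deriv[OF ac sN])
  have rfin: "AE x in ?L. r x \<noteq> \<infinity>" unfolding r_def
    by (rule L.RN_deriv_finite[OF _ ac sN]) unfold_locales
  have dq: "density ?L (\<lambda>x. ennreal (q x)) = ?N"
    unfolding dr[symmetric] q_def
    by (rule density_cong) (use rfin rm in \<open>auto simp: ennreal_enn2real_if\<close>)
  have q0: "\<forall>x. 0 \<le> q x" unfolding q_def by simp
  have "integrable ?N (\<lambda>_. 1::real)" by simp
  then have "integrable ?L q"
    unfolding dq[symmetric] by (subst (asm) integrable_density) (simp_all add: q0)
  then have qi: "integrable P (\<lambda>\<omega>. q (X \<omega>))" by (subst (asm) integrable_distr_eq) simp_all
  have ch: "(\<integral>\<omega>. indicator A (X \<omega>) * Z \<omega> \<partial>P) = (\<integral>\<omega>. indicator A (X \<omega>) * q (X \<omega>) \<partial>P)"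
    if A[measurable]: "A \<in> sets borel" for A
  proof -
    have "(\<integral>\<omega>. indicator A (X \<omega>) * Z \<omega> \<partial>P) = integral\<^sup>L ?N (indicator A)"
      by (subst integral_distr) (simp_all add: integral_density Z0 mult.commute)
    also have "\<dots> = integral\<^sup>L ?L (\<lambda>x. q x * indicator A x)"
      unfolding dq[symmetric] by (subst integral_density) (simp_all add: q0)
    also have "\<dots> = (\<integral>\<omega>. indicator A (X \<omega>) * q (X \<omega>) \<partial>P)"
      by (subst integral_distr) (simp_all add: mult.commute)
    finally show ?thesis .
  qed
  have "AE \<omega> in P. real_cond_exp P (vimage_algebra (space P) X borel) Z \<omega> = q (X \<omega>)"
  proof (rule S.real_cond_exp_charact)
    fix A assume "A \<in> sets (vimage_algebra (space P) X borel)"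
    then obtain B where B: "B \<in> sets borel" and AB: "A = X -` B \<inter> space P"
      by (subst (asm) sets_vimage_algebra2) auto
    have "(\<integral>\<omega>\<in>A. Z \<omega> \<partial>P) = (\<integral>\<omega>. indicator B (X \<omega>) * Z \<omega> \<partial>P)"
      unfolding set_lebesgue_integral_def AB by (intro Bochner_Integration.integral_cong) (auto simp: indicator_def)
    also have "\<dots> = (\<integral>\<omega>. indicator B (X \<omega>) * q (X \<omega>) \<partial>P)" by (rule ch[OF B])
    also have "\<dots> = (\<integral>\<omega>\<in>A. q (X \<omega>) \<partial>P)"
      unfolding set_lebesgue_integral_def AB by (intro Bochner_Integration.integral_cong) (auto simp: indicator_def)
    finally show "(\<integral>\<omega>\<in>A. Z \<omega> \<partial>P) = (\<integral>\<omega>\<in>A. q (X \<omega>) \<partial>P)" .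
  next
    show "integrable P Z" by (rule Zi)
    show "integrable P (\<lambda>\<omega>. q (X \<omega>))" by (rule qi)
    show "(\<lambda>\<omega>. q (X \<omega>)) \<in> borel_measurable (vimage_algebra (space P) X borel)"
      by (rule meas_vimage_comp[OF qm])
  qed
  then show ?thesis using qm q0 qi by blast
qed

lemma indep_rect:
  fixes X :: "'a \<Rightarrow> 'b::second_countable_topology" and W :: "'a \<Rightarrow> 'c::second_countable_topology"
  assumes P: "prob_space P" and Xm[measurable]: "X \<in> measurable P borel" and Zm[measurable]: "Z \<in> borel_measurable P"
    and Zb: "\<forall>\<omega> \<in> space P. Z \<omega> \<in> {0, 1}" and Wm[measurable]: "W \<in> measurable P borel"
    and ci: "cond_indep P X Z W"
    and qm[measurable]: "q \<in> borel_measurable borel"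
    and pq: "AE \<omega> in P. real_cond_exp P (vimage_algebra (space P) X borel) Z \<omega> = q (X \<omega>)"
    and A[measurable]: "A \<in> sets borel" and B[measurable]: "B \<in> sets borel"
  shows "(\<integral>\<omega>. Z \<omega> * (indicator A (X \<omega>) * indicator B (W \<omega>)) \<partial>P) =
         (\<integral>\<omega>. q (X \<omega>) * (indicator A (X \<omega>) * indicator B (W \<omega>)) \<partial>P)"
proof -
  interpret prob_space P by fact
  interpret S: finite_measure_subalgebra P "vimage_algebra (space P) X borel"
    by (rule subalg_vimage[OF P Xm])
  let ?F = "vimage_algebra (space P) X borel"
  let ?cx = "real_cond_exp P ?F"
  have Z0: "\<And>\<omega>. \<omega> \<in> space P \<Longrightarrow> 0 \<le> Z \<omega> \<and> Z \<omega> \<le> 1" using Zb by auto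
  have c1: "AE \<omega> in P. ?cx (\<lambda>\<eta>. indicator {1::real} (Z \<eta>) * indicator B (W \<eta>)) \<omega> =
      ?cx (\<lambda>\<eta>. indicator {1::real} (Z \<eta>)) \<omega> * ?cx (\<lambda>\<eta>. indicator B (W \<eta>)) \<omega>"
    using ci unfolding cond_indep_def by auto
  have e1: "AE \<omega> in P. ?cx (\<lambda>\<eta>. indicator {1::real} (Z \<eta>) * indicator B (W \<eta>)) \<omega> = ?cx (\<lambda>\<eta>. Z \<eta> * indicator B (W \<eta>)) \<omega>"
    by (rule S.real_cond_exp_cong) (use Zb in \<open>auto intro!: AE_I2 simp: indicator_def\<close>)
  have e2: "AE \<omega> in P. ?cx (\<lambda>\<eta>. indicator {1::real} (Z \<eta>)) \<omega> = ?cx Z \<omega>"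
    by (rule S.real_cond_exp_cong) (use Zb in \<open>auto intro!: AE_I2 simp: indicator_def\<close>)
  have fA: "(\<lambda>\<omega>. indicator A (X \<omega>) :: real) \<in> borel_measurable ?F"
    by (rule meas_vimage_comp) simp
  have cxF: "?cx Z \<in> borel_measurable ?F" by simp
  have Zi: "integrable P Z"
    by (rule integrable_const_bound[where B=1]) (use Z0 in auto)
  have cxi: "integrable P (?cx Z)" by (rule S.real_cond_exp_int(1)[OF Zi])
  have "(\<integral>\<omega>. Z \<omega> * (indicator A (X \<omega>) * indicator B (W \<omega>)) \<partial>P) =
        (\<integral>\<omega>. indicator A (X \<omega>) * (Z \<omega> * indicator B (W \<omega>)) \<partial>P)"
    by (simp add: mult_ac)
  also have "\<dots> = (\<integral>\<omega>. indicator A (X \<omega>) * ?cx (\<lambda>\<eta>. Z \<eta> * indicator B (W \<eta>)) \<omega> \<partial>P)"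
  proof (rule S.real_cond_exp_intg(2)[symmetric, OF _ fA])
    show "integrable P (\<lambda>\<omega>. indicator A (X \<omega>) * (Z \<omega> * indicator B (W \<omega>)))"
      by (rule integrable_const_bound[where B=1]) (use Z0 in \<open>auto simp: indicator_def\<close>)
  qed simp
  also have "\<dots> = (\<integral>\<omega>. (indicator A (X \<omega>) * ?cx Z \<omega>) * ?cx (\<lambda>\<eta>. indicator B (W \<eta>)) \<omega> \<partial>P)"
    by (rule integral_cong_AE) (use c1 e1 e2 in \<open>auto simp: mult_ac\<close>)
  also have "\<dots> = (\<integral>\<omega>. (indicator A (X \<omega>) * ?cx Z \<omega>) * indicator B (W \<omega>) \<partial>P)"
  proof (rule S.real_cond_exp_intg(2))
    show "integrable P (\<lambda>\<omega>. indicator A (X \<omega>) * ?cx Z \<omega> * indicator B (W \<omega>))"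
      by (rule Bochner_Integration.integrable_bound[OF cxi]) (auto simp: indicator_def)
    show "(\<lambda>\<omega>. indicator A (X \<omega>) * ?cx Z \<omega>) \<in> borel_measurable ?F"
      using fA cxF by (rule borel_measurable_times)
  qed simp
  also have "\<dots> = (\<integral>\<omega>. q (X \<omega>) * (indicator A (X \<omega>) * indicator B (W \<omega>)) \<partial>P)"
    by (rule integral_cong_AE) (use pq in \<open>auto simp: mult_ac\<close>)
  finally show ?thesis .
qed

lemma cexp_version_intg:
  fixes V :: "'a \<Rightarrow> 'b::topological_space"
  assumes P: "prob_space P" and ce: "cond_exp_version P V Y g" and Yi: "integrable P Y"
    and phim[measurable]: "phi \<in> borel_measurable borel" and phib: "\<And>v. \<bar>phi v\<bar> \<le> C"
  shows "(\<integral>\<omega>. phi (V \<omega>) * Y \<omega> \<partial>P) = (\<integral>\<omega>. phi (V \<omega>) * g (V \<omega>) \<partial>P)"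
proof -
  interpret prob_space P by fact
  have Vm[measurable]: "V \<in> measurable P borel" and gm[measurable]: "g \<in> borel_measurable borel"
    and gi: "integrable P (\<lambda>\<omega>. g (V \<omega>))"
    and eq: "\<And>S. S \<in> sets borel \<Longrightarrow> (\<integral>\<omega>. indicator S (V \<omega>) * Y \<omega> \<partial>P) = (\<integral>\<omega>. indicator S (V \<omega>) * g (V \<omega>) \<partial>P)"
    using ce unfolding cond_exp_version_def by auto
  interpret S: finite_measure_subalgebra P "vimage_algebra (space P) V borel"
    by (rule subalg_vimage[OF P Vm])
  let ?F = "vimage_algebra (space P) V borel"
  have Ym[measurable]: "Y \<in> borel_measurable P" using Yi by auto
  have ae: "AE \<omega> in P. real_cond_exp P ?F Y \<omega> = g (V \<omega>)"
  proof (rule S.real_cond_exp_charact)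
    fix A assume "A \<in> sets ?F"
    then obtain B where B: "B \<in> sets borel" and AB: "A = V -` B \<inter> space P"
      by (subst (asm) sets_vimage_algebra2) auto
    have "(\<integral>\<omega>\<in>A. Y \<omega> \<partial>P) = (\<integral>\<omega>. indicator B (V \<omega>) * Y \<omega> \<partial>P)"
      unfolding set_lebesgue_integral_def AB by (intro Bochner_Integration.integral_cong) (auto simp: indicator_def)
    also have "\<dots> = (\<integral>\<omega>. indicator B (V \<omega>) * g (V \<omega>) \<partial>P)" by (rule eq[OF B])
    also have "\<dots> = (\<integral>\<omega>\<in>A. g (V \<omega>) \<partial>P)"
      unfolding set_lebesgue_integral_def AB by (intro Bochner_Integration.integral_cong) (auto simp: indicator_def)
    finally show "(\<integral>\<omega>\<in>A. Y \<omega> \<partial>P) = (\<integral>\<omega>\<in>A. g (V \<omega>) \<partial>P)" .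
  qed (simp_all add: Yi gi meas_vimage_comp)
  have "(\<integral>\<omega>. phi (V \<omega>) * Y \<omega> \<partial>P) = (\<integral>\<omega>. phi (V \<omega>) * real_cond_exp P ?F Y \<omega> \<partial>P)"
  proof (rule S.real_cond_exp_intg(2)[symmetric])
    have "integrable P (\<lambda>\<omega>. C * Y \<omega>)" using Yi by simp
    then show "integrable P (\<lambda>\<omega>. phi (V \<omega>) * Y \<omega>)"
    proof (rule Bochner_Integration.integrable_bound)
      show "AE \<omega> in P. norm (phi (V \<omega>) * Y \<omega>) \<le> norm (C * Y \<omega>)"
      proof (rule AE_I2)
        fix \<omega>
        have "\<bar>phi (V \<omega>)\<bar> * \<bar>Y \<omega>\<bar> \<le> \<bar>C\<bar> * \<bar>Y \<omega>\<bar>"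
          using phib[of "V \<omega>"] by (intro mult_right_mono) auto
        then show "norm (phi (V \<omega>) * Y \<omega>) \<le> norm (C * Y \<omega>)" by (simp add: abs_mult)
      qed
    qed simp
  qed (simp_all add: meas_vimage_comp)
  also have "\<dots> = (\<integral>\<omega>. phi (V \<omega>) * g (V \<omega>) \<partial>P)"
    by (rule integral_cong_AE) (use ae in auto)
  finally show ?thesis .
qed

lemma stepB:
  fixes X :: "'a \<Rightarrow> 'b::second_countable_topology" and Zt Mt Yt :: "'a \<Rightarrow> real" and qt :: "'b \<Rightarrow> real"
    and m gt :: "'b \<times> real \<Rightarrow> real"
  assumes P: "prob_space P" and Xm[measurable]: "X \<in> measurable P borel" and Mtm[measurable]: "Mt \<in> borel_measurable P"
    and Yi: "integrable P Yt" and Ztm[measurable]: "Zt \<in> borel_measurable P" and Ztb: "\<forall>\<omega> \<in> space P. Zt \<omega> \<in> {0, 1}"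
    and qtm[measurable]: "qt \<in> borel_measurable borel" and qtb: "\<And>x. 0 \<le> qt x \<and> qt x \<le> 1"
    and qpos: "AE \<omega> in P. 0 < qt (X \<omega>)"
    and LI: "\<And>h. h \<in> borel_measurable borel \<Longrightarrow>
       (\<integral>\<omega>. Zt \<omega> * h (X \<omega>, Mt \<omega>, Yt \<omega>) \<partial>P) = (\<integral>\<omega>. qt (X \<omega>) * h (X \<omega>, Mt \<omega>, Yt \<omega>) \<partial>P)"
    and ge: "cond_exp_version P (\<lambda>\<omega>. (X \<omega>, Mt \<omega>)) Yt gt"
    and mm[measurable]: "m \<in> borel_measurable borel"
    and mi: "integrable P (\<lambda>\<omega>. Zt \<omega> * m (X \<omega>, Mt \<omega>))"
    and key: "\<And>S. S \<in> sets borel \<Longrightarrow> (\<integral>\<omega>. Zt \<omega> * indicator S (X \<omega>, Mt \<omega>) * Yt \<omega> \<partial>P) =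
        (\<integral>\<omega>. Zt \<omega> * indicator S (X \<omega>, Mt \<omega>) * m (X \<omega>, Mt \<omega>) \<partial>P)"
  shows "AE \<omega> in P. m (X \<omega>, Mt \<omega>) = gt (X \<omega>, Mt \<omega>)"
proof -
  interpret prob_space P by fact
  note [measurable (raw)] = borel_measurable_fst_comp borel_measurable_snd_comp
  note [measurable] = borel_measurable_id_prod
  have gm[measurable]: "gt \<in> borel_measurable borel" and gi: "integrable P (\<lambda>\<omega>. gt (X \<omega>, Mt \<omega>))"
    using ge unfolding cond_exp_version_def by auto
  have Ym[measurable]: "Yt \<in> borel_measurable P" using Yi by auto
  have Z01: "\<And>\<omega>. \<omega> \<in> space P \<Longrightarrow> 0 \<le> Zt \<omega> \<and> Zt \<omega> \<le> 1" using Ztb by auto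
  have zero: "(\<integral>\<omega>. Zt \<omega> * indicator S (X \<omega>, Mt \<omega>) * (m (X \<omega>, Mt \<omega>) - gt (X \<omega>, Mt \<omega>)) \<partial>P) = 0"
    if S[measurable]: "S \<in> sets borel" for S
  proof -
    have h1: "(\<lambda>p. indicator S (fst p, fst (snd p)) * snd (snd p)) \<in> borel_measurable (borel :: ('b \<times> real \<times> real) measure)"
      by measurable
    have h2: "(\<lambda>p. indicator S (fst p, fst (snd p)) * gt (fst p, fst (snd p))) \<in> borel_measurable (borel :: ('b \<times> real \<times> real) measure)"
      by measurable
    have "(\<integral>\<omega>. Zt \<omega> * indicator S (X \<omega>, Mt \<omega>) * Yt \<omega> \<partial>P) = (\<integral>\<omega>. qt (X \<omega>) * (indicator S (X \<omega>, Mt \<omega>) * Yt \<omega>) \<partial>P)"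
      using LI[OF h1] by (simp add: mult_ac)
    also have "\<dots> = (\<integral>\<omega>. (\<lambda>v. qt (fst v) * indicator S v) (X \<omega>, Mt \<omega>) * Yt \<omega> \<partial>P)"
      by (simp add: mult_ac)
    also have "\<dots> = (\<integral>\<omega>. (\<lambda>v. qt (fst v) * indicator S v) (X \<omega>, Mt \<omega>) * gt (X \<omega>, Mt \<omega>) \<partial>P)"
    proof (rule cexp_version_intg[OF P ge Yi, where C=1])
      fix v :: "'b \<times> real" show "\<bar>qt (fst v) * indicator S v\<bar> \<le> 1"
        using qtb[of "fst v"] by (auto simp: indicator_def)
    qed measurable
    also have "\<dots> = (\<integral>\<omega>. qt (X \<omega>) * (indicator S (X \<omega>, Mt \<omega>) * gt (X \<omega>, Mt \<omega>)) \<partial>P)"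
      by (simp add: mult_ac)
    also have "\<dots> = (\<integral>\<omega>. Zt \<omega> * indicator S (X \<omega>, Mt \<omega>) * gt (X \<omega>, Mt \<omega>) \<partial>P)"
      using LI[OF h2] by (simp add: mult_ac)
    finally have E: "(\<integral>\<omega>. Zt \<omega> * indicator S (X \<omega>, Mt \<omega>) * Yt \<omega> \<partial>P) =
        (\<integral>\<omega>. Zt \<omega> * indicator S (X \<omega>, Mt \<omega>) * gt (X \<omega>, Mt \<omega>) \<partial>P)" .
    have i1: "integrable P (\<lambda>\<omega>. Zt \<omega> * indicator S (X \<omega>, Mt \<omega>) * m (X \<omega>, Mt \<omega>))"
      by (rule Bochner_Integration.integrable_bound[OF mi]) (auto simp: indicator_def)
    have i2: "integrable P (\<lambda>\<omega>. Zt \<omega> * indicator S (X \<omega>, Mt \<omega>) * gt (X \<omega>, Mt \<omega>))"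
    proof (rule Bochner_Integration.integrable_bound[OF gi])
      show "AE \<omega> in P. norm (Zt \<omega> * indicator S (X \<omega>, Mt \<omega>) * gt (X \<omega>, Mt \<omega>)) \<le> norm (gt (X \<omega>, Mt \<omega>))"
        using Ztb by (auto intro!: AE_I2 simp: indicator_def)
    qed simp
    have "(\<integral>\<omega>. Zt \<omega> * indicator S (X \<omega>, Mt \<omega>) * (m (X \<omega>, Mt \<omega>) - gt (X \<omega>, Mt \<omega>)) \<partial>P) =
      (\<integral>\<omega>. Zt \<omega> * indicator S (X \<omega>, Mt \<omega>) * m (X \<omega>, Mt \<omega>) - Zt \<omega> * indicator S (X \<omega>, Mt \<omega>) * gt (X \<omega>, Mt \<omega>) \<partial>P)"
      by (simp add: right_diff_distrib)
    also have "\<dots> = 0" using i1 i2 E key[OF S] by simp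
    finally show ?thesis .
  qed
  have "{p \<in> space borel. gt p < m p} \<in> sets borel" by (rule borel_measurable_less[OF gm mm])
  then have Sp[measurable]: "{p. gt p < m p} \<in> sets borel" by (simp only: space_borel UNIV_I simp_thms Collect_conj_eq Collect_const)
  have "{p \<in> space borel. m p < gt p} \<in> sets borel" by (rule borel_measurable_less[OF mm gm])
  then have Sm[measurable]: "{p. m p < gt p} \<in> sets borel" by (simp only: space_borel UNIV_I simp_thms Collect_conj_eq Collect_const)
  define NN where "NN = {p. m p \<noteq> gt p}"
  have "NN = {p. m p < gt p} \<union> {p. gt p < m p}" unfolding NN_def by auto
  then have N[measurable]: "NN \<in> sets borel" using Sp Sm by simp
  let ?f = "\<lambda>\<omega>. Zt \<omega> * indicator {p. gt p < m p} (X \<omega>, Mt \<omega>) * (m (X \<omega>, Mt \<omega>) - gt (X \<omega>, Mt \<omega>))"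
  have fi: "integrable P ?f" (is "integrable P ?F")
  proof -
    have "integrable P (\<lambda>\<omega>. Zt \<omega> * m (X \<omega>, Mt \<omega>) - Zt \<omega> * gt (X \<omega>, Mt \<omega>))"
    proof (rule Bochner_Integration.integrable_diff[OF mi])
      show "integrable P (\<lambda>\<omega>. Zt \<omega> * gt (X \<omega>, Mt \<omega>))"
        by (rule Bochner_Integration.integrable_bound[OF gi]) (use Ztb in \<open>auto intro!: AE_I2\<close>)
    qed
    moreover have "?F \<in> borel_measurable P" by measurable
    ultimately show ?thesis
      by (rule Bochner_Integration.integrable_bound) (use Ztb in \<open>auto intro!: AE_I2 simp: indicator_def\<close>)
  qed
  have f0: "AE \<omega> in P. 0 \<le> ?f \<omega>"
  proof (rule AE_I2)
    fix \<omega> assume "\<omega> \<in> space P"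
    then have "0 \<le> Zt \<omega>" using Z01 by blast
    then show "0 \<le> ?f \<omega>" by (simp add: indicator_def)
  qed
  have "AE \<omega> in P. ?f \<omega> = 0"
    using integral_nonneg_eq_0_iff_AE[OF fi f0] zero[OF Sp] by simp
  then have ae1: "AE \<omega> in P. Zt \<omega> = 1 \<longrightarrow> m (X \<omega>, Mt \<omega>) \<le> gt (X \<omega>, Mt \<omega>)"
    by eventually_elim (auto simp: indicator_def split: if_splits)
  let ?g = "\<lambda>\<omega>. - (Zt \<omega> * indicator {p. m p < gt p} (X \<omega>, Mt \<omega>) * (m (X \<omega>, Mt \<omega>) - gt (X \<omega>, Mt \<omega>)))"
  have gi2: "integrable P ?g" (is "integrable P ?F")
  proof -
    have "integrable P (\<lambda>\<omega>. Zt \<omega> * m (X \<omega>, Mt \<omega>) - Zt \<omega> * gt (X \<omega>, Mt \<omega>))"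
    proof (rule Bochner_Integration.integrable_diff[OF mi])
      show "integrable P (\<lambda>\<omega>. Zt \<omega> * gt (X \<omega>, Mt \<omega>))"
        by (rule Bochner_Integration.integrable_bound[OF gi]) (use Ztb in \<open>auto intro!: AE_I2\<close>)
    qed
    moreover have "?F \<in> borel_measurable P" by measurable
    ultimately show ?thesis
      by (rule Bochner_Integration.integrable_bound) (use Ztb in \<open>auto intro!: AE_I2 simp: indicator_def\<close>)
  qed
  have g0: "AE \<omega> in P. 0 \<le> ?g \<omega>"
  proof (rule AE_I2)
    fix \<omega> assume "\<omega> \<in> space P"
    then have "0 \<le> Zt \<omega>" using Z01 by blast
    then show "0 \<le> ?g \<omega>" by (simp add: indicator_def mult_le_0_iff)
  qed
  have "(\<integral>\<omega>. ?g \<omega> \<partial>P) = 0" using zero[OF Sm] by simp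
  then have "AE \<omega> in P. ?g \<omega> = 0"
    using integral_nonneg_eq_0_iff_AE[OF gi2 g0] by simp
  then have ae2: "AE \<omega> in P. Zt \<omega> = 1 \<longrightarrow> gt (X \<omega>, Mt \<omega>) \<le> m (X \<omega>, Mt \<omega>)"
    by eventually_elim (auto simp: indicator_def split: if_splits)
  let ?N = NN
  have hN: "(\<lambda>p. indicator ?N (fst p, fst (snd p))) \<in> borel_measurable (borel :: ('b \<times> real \<times> real) measure)"
    by measurable
  have mN: "(\<lambda>\<omega>. Zt \<omega> * indicator ?N (X \<omega>, Mt \<omega>)) \<in> borel_measurable P" by measurable
  have mN2: "(\<lambda>\<omega>. qt (X \<omega>) * indicator ?N (X \<omega>, Mt \<omega>)) \<in> borel_measurable P" by measurable
  have aeN: "AE \<omega> in P. Zt \<omega> * indicator ?N (X \<omega>, Mt \<omega>) = 0"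
    using ae1 ae2 AE_space
  proof eventually_elim
    case (elim \<omega>)
    then have "Zt \<omega> = 0 \<or> Zt \<omega> = 1" using Ztb by blast
    then show ?case
    proof
      assume "Zt \<omega> = 1"
      then have "m (X \<omega>, Mt \<omega>) = gt (X \<omega>, Mt \<omega>)" using elim by (intro antisym) auto
      then show ?thesis by (simp add: indicator_def NN_def)
    qed simp
  qed
  have "(\<integral>\<omega>. Zt \<omega> * indicator ?N (X \<omega>, Mt \<omega>) \<partial>P) = (\<integral>\<omega>. 0 \<partial>P)"
    by (rule integral_cong_AE[OF mN _ aeN]) simp
  then have "(\<integral>\<omega>. qt (X \<omega>) * indicator ?N (X \<omega>, Mt \<omega>) \<partial>P) = 0"
    using LI[OF hN] by simp
  moreover have "integrable P (\<lambda>\<omega>. qt (X \<omega>) * indicator ?N (X \<omega>, Mt \<omega>))"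
  proof (rule integrable_const_bound[where B=1, OF _ mN2], rule AE_I2)
    fix \<omega> show "norm (qt (X \<omega>) * indicator ?N (X \<omega>, Mt \<omega>)) \<le> 1"
      using qtb[of "X \<omega>"] by (simp add: indicator_def)
  qed
  moreover have "AE \<omega> in P. 0 \<le> qt (X \<omega>) * indicator ?N (X \<omega>, Mt \<omega>)"
    using qtb by (intro AE_I2) simp
  ultimately have "AE \<omega> in P. qt (X \<omega>) * indicator ?N (X \<omega>, Mt \<omega>) = 0"
    using integral_nonneg_eq_0_iff_AE by blast
  then show ?thesis using qpos
  proof eventually_elim
    case (elim \<omega>)
    then show ?case by (auto simp: indicator_def NN_def split: if_splits)
  qed
qed

lemma borel_rat_atMost: "borel = sigma UNIV (range (\<lambda>r::rat. {..real_of_rat r}))"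
proof (rule borel_eq_sigmaI1[OF borel_eq_atMost])
  fix x :: "real set" assume "x \<in> range (\<lambda>a. {..a})"
  then obtain a where x: "x = {..a}" by auto
  have eq: "{..a} = (\<Inter>r\<in>{r. a < real_of_rat r}. {..real_of_rat r})"
  proof (intro antisym subsetI)
    fix y assume "y \<in> {..a}" then show "y \<in> (\<Inter>r\<in>{r. a < real_of_rat r}. {..real_of_rat r})" by auto
  next
    fix y assume y: "y \<in> (\<Inter>r\<in>{r. a < real_of_rat r}. {..real_of_rat r})"
    show "y \<in> {..a}"
    proof (rule ccontr)
      assume "y \<notin> {..a}"
      then have "a < y" by auto
      then obtain r :: rat where "a < of_rat r" "of_rat r < y" using of_rat_dense by blast
      then show False using y by auto
    qed
  qed
  have ne: "{r. a < real_of_rat r} \<noteq> {}"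
  proof -
    obtain r :: rat where "a < of_rat r" "of_rat r < a + 1" using of_rat_dense[of a "a+1"] by auto
    then show ?thesis by auto
  qed
  have "(\<Inter>r\<in>{r. a < real_of_rat r}. {..real_of_rat r}) \<in> sets (sigma UNIV (range (\<lambda>r::rat. {..real_of_rat r})))"
    by (rule sets.countable_INT) (use ne in auto)
  then show "x \<in> sets (sigma UNIV (range (\<lambda>r::rat. {..real_of_rat r})))" using eq x by simp
qed auto

lemma density_eq_from_rat:
  fixes f g :: "real \<Rightarrow> real"
  assumes fm[measurable]: "f \<in> borel_measurable borel" and gm[measurable]: "g \<in> borel_measurable borel"
    and f0: "\<And>m. 0 \<le> f m" and g0: "\<And>m. 0 \<le> g m"
    and eqr: "\<And>r::rat. (\<integral>\<^sup>+ m. indicator {..real_of_rat r} m * ennreal (f m) \<partial>lborel) =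
                       (\<integral>\<^sup>+ m. indicator {..real_of_rat r} m * ennreal (g m) \<partial>lborel)"
    and fin: "(\<integral>\<^sup>+ m. ennreal (f m) \<partial>lborel) \<noteq> \<infinity>"
  shows "AE m in lborel. f m = g m"
proof -
  let ?E = "range (\<lambda>r::rat. {..real_of_rat r})"
  have sE: "sets (borel :: real measure) = sigma_sets UNIV ?E"
    by (subst borel_rat_atMost) (simp add: sets_measure_of)
  have D: "density lborel (\<lambda>m. ennreal (f m)) = density lborel (\<lambda>m. ennreal (g m))"
  proof (rule measure_eqI_generator_eq[where E="?E" and \<Omega>=UNIV and A="\<lambda>i. {..real_of_rat (of_nat i)}"])
    show "Int_stable ?E"
    proof (rule Int_stableI)
      fix a b assume "a \<in> ?E" "b \<in> ?E"
      then obtain r s :: rat where "a = {..real_of_rat r}" "b = {..real_of_rat s}" by auto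
      then have "a \<inter> b = {..real_of_rat (min r s)}" by (auto simp: of_rat_less_eq min_def)
      then show "a \<inter> b \<in> ?E" by auto
    qed
    show "?E \<subseteq> Pow UNIV" by auto
    fix X assume "X \<in> ?E"
    then obtain r :: rat where X: "X = {..real_of_rat r}" by auto
    show "emeasure (density lborel (\<lambda>m. ennreal (f m))) X = emeasure (density lborel (\<lambda>m. ennreal (g m))) X"
      unfolding X using eqr[of r] by (simp add: emeasure_density mult.commute)
  next
    show "sets (density lborel (\<lambda>m. ennreal (f m))) = sigma_sets UNIV ?E" using sE by simp
    show "sets (density lborel (\<lambda>m. ennreal (g m))) = sigma_sets UNIV ?E" using sE by simp
    show "range (\<lambda>i. {..real_of_rat (of_nat i)}) \<subseteq> ?E" by (intro image_subsetI rangeI)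
    show "(\<Union>i. {..real_of_rat (of_nat i)}) = UNIV"
    proof (intro antisym subsetI)
      fix x :: real
      obtain n :: nat where "x \<le> real n" using real_arch_simple by blast
      then show "x \<in> (\<Union>i. {..real_of_rat (of_nat i)})" by auto
    qed auto
    fix i :: nat
    have "emeasure (density lborel (\<lambda>m. ennreal (f m))) {..real_of_rat (of_nat i)} \<le>
        emeasure (density lborel (\<lambda>m. ennreal (f m))) UNIV"
      by (rule emeasure_mono) auto
    also have "\<dots> = (\<integral>\<^sup>+ m. ennreal (f m) \<partial>lborel)" by (simp add: emeasure_density)
    finally show "emeasure (density lborel (\<lambda>m. ennreal (f m))) {..real_of_rat (of_nat i)} \<noteq> \<infinity>"
      using fin by (auto simp: top_unique)
  qed
  have "AE m in lborel. ennreal (f m) = ennreal (g m)"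
    by (rule sigma_finite_measure.density_unique[OF sigma_finite_lborel _ _ D]) simp_all
  then show ?thesis by eventually_elim (use f0 g0 in auto)
qed

lemma cond_density_nn_integral:
  fixes V :: "'a \<Rightarrow> 'b::second_countable_topology" and W :: "'a \<Rightarrow> 'w::euclidean_space"
    and F :: "'b \<times> 'w \<Rightarrow> ennreal"
  assumes P: "prob_space P" and cd: "cond_density_version P V W f"
    and Fm: "F \<in> borel_measurable borel"
  shows "(\<integral>\<^sup>+\<omega>. F (V \<omega>, W \<omega>) \<partial>P) = (\<integral>\<^sup>+\<omega>. (\<integral>\<^sup>+w. ennreal (f (V \<omega>) w) * F (V \<omega>, w) \<partial>lborel) \<partial>P)"
proof -
  interpret prob_space P by fact
  have Vm[measurable]: "V \<in> measurable P borel" and Wm[measurable]: "W \<in> borel_measurable P"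
    and fm[measurable]: "(\<lambda>(v, w). f v w) \<in> borel_measurable borel" and fnn: "\<And>v w. 0 \<le> f v w"
    using cd unfolding cond_density_version_def by auto
  let ?L = "distr P borel V"
  interpret L: prob_space ?L by (rule prob_space_distr) simp
  interpret PS: pair_sigma_finite ?L lborel ..
  have S: "sets (?L \<Otimes>\<^sub>M lborel) = sets (borel :: ('b \<times> 'w) measure)" by (rule sets_pair_borel_lborel)
  have fr: "(\<lambda>p. f (fst p) (snd p)) \<in> borel_measurable (?L \<Otimes>\<^sub>M lborel)"
    by (subst measurable_cong_sets[OF S refl]) (use fm in \<open>simp add: case_prod_beta'\<close>)
  have Fr: "F \<in> borel_measurable (?L \<Otimes>\<^sub>M lborel)"
    by (subst measurable_cong_sets[OF S refl]) (rule Fm)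
  have D: "distr P borel (\<lambda>\<omega>. (V \<omega>, W \<omega>)) = density (?L \<Otimes>\<^sub>M lborel) (\<lambda>p. ennreal (f (fst p) (snd p)))"
    by (rule cond_density_distr[OF P cd])
  have "(\<integral>\<^sup>+\<omega>. F (V \<omega>, W \<omega>) \<partial>P) = integral\<^sup>N (distr P borel (\<lambda>\<omega>. (V \<omega>, W \<omega>))) F"
    by (rule nn_integral_distr[symmetric]) (simp_all add: Fm)
  also have "\<dots> = integral\<^sup>N (?L \<Otimes>\<^sub>M lborel) (\<lambda>p. ennreal (f (fst p) (snd p)) * F p)"
    unfolding D by (rule nn_integral_density) (use fr Fr in simp_all)
  also have "\<dots> = (\<integral>\<^sup>+v. (\<integral>\<^sup>+w. ennreal (f (fst (v,w)) (snd (v,w))) * F (v,w) \<partial>lborel) \<partial>?L)"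
    by (rule lborel.nn_integral_fst[symmetric]) (use fr Fr in simp)
  also have "\<dots> = (\<integral>\<^sup>+\<omega>. (\<integral>\<^sup>+w. ennreal (f (V \<omega>) w) * F (V \<omega>, w) \<partial>lborel) \<partial>P)"
  proof (subst nn_integral_distr)
    have "(\<lambda>p. ennreal (f (fst p) (snd p)) * F p) \<in> borel_measurable (?L \<Otimes>\<^sub>M lborel)" using fr Fr by simp
    then have "(\<lambda>p. ennreal (f (fst p) (snd p)) * F p) \<in> borel_measurable (borel \<Otimes>\<^sub>M lborel)"
      by (subst measurable_cong_sets[where M'="?L \<Otimes>\<^sub>M lborel", OF sets_pair_measure_cong refl]) simp_all
    then show "(\<lambda>v. \<integral>\<^sup>+w. ennreal (f (fst (v,w)) (snd (v,w))) * F (v,w) \<partial>lborel) \<in> borel_measurable (distr P borel V)"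
      using lborel.borel_measurable_nn_integral_fst[of "\<lambda>p. ennreal (f (fst p) (snd p)) * F p" borel] by simp
  qed simp_all
  finally show ?thesis .
qed

lemma sets_borel_lborel: "sets (borel \<Otimes>\<^sub>M (lborel :: 'w::euclidean_space measure)) = sets (borel :: ('b::second_countable_topology \<times> 'w) measure)"
  by (metis borel_prod sets_lborel sets_pair_measure_cong)

lemma meas_slice2:
  fixes f :: "'b::second_countable_topology \<times> real \<Rightarrow> real \<Rightarrow> real"
  assumes fm: "(\<lambda>(v, w). f v w) \<in> borel_measurable borel"
  shows "(\<lambda>p. f (fst p, z) (snd p)) \<in> borel_measurable (borel \<Otimes>\<^sub>M lborel)"
proof -
  note [measurable (raw)] = borel_measurable_fst_comp borel_measurable_snd_comp
  note [measurable] = borel_measurable_id_prod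
  have "(\<lambda>p. ((fst p, z), snd p)) \<in> measurable (borel :: ('b \<times> real) measure) borel" by measurable
  from measurable_compose[OF this fm] have "(\<lambda>p. f (fst p, z) (snd p)) \<in> borel_measurable (borel :: ('b \<times> real) measure)"
    by simp
  then show ?thesis by (subst measurable_cong_sets[OF sets_borel_lborel refl])
qed

lemma meas_slice1:
  fixes f :: "'b::second_countable_topology \<Rightarrow> real \<Rightarrow> real"
  assumes fm: "(\<lambda>(v, w). f v w) \<in> borel_measurable borel"
  shows "(\<lambda>p. f (fst p) (snd p)) \<in> borel_measurable (borel \<Otimes>\<^sub>M lborel)"
  by (subst measurable_cong_sets[OF sets_borel_lborel refl]) (use fm in \<open>simp add: case_prod_beta'\<close>)

lemma meas_G:
  fixes f :: "'b::second_countable_topology \<Rightarrow> real \<Rightarrow> real"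
  assumes fm: "(\<lambda>p. f (fst p) (snd p)) \<in> borel_measurable (borel \<Otimes>\<^sub>M lborel)" and B: "B \<in> sets borel"
  shows "(\<lambda>x. \<integral>\<^sup>+ m. indicator B m * ennreal (f x m) \<partial>lborel) \<in> borel_measurable borel"
proof -
  have "(\<lambda>p. indicator B (snd p) * ennreal (f (fst p) (snd p))) \<in> borel_measurable (borel \<Otimes>\<^sub>M lborel)"
    using fm B by measurable
  from lborel.borel_measurable_nn_integral_fst[OF this] show ?thesis by simp
qed

lemma slice_meas:
  fixes f :: "'b::second_countable_topology \<Rightarrow> real \<Rightarrow> real"
  assumes fm: "(\<lambda>p. f (fst p) (snd p)) \<in> borel_measurable (borel \<Otimes>\<^sub>M lborel)"
  shows "f x \<in> borel_measurable borel" and "f x \<in> borel_measurable lborel"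
proof -
  have "(\<lambda>m. (\<lambda>p. f (fst p) (snd p)) (x, m)) \<in> borel_measurable lborel"
    by (rule measurable_Pair2[OF fm]) simp
  then show "f x \<in> borel_measurable lborel" by (simp add: measurable_cong_sets[OF sets_lborel refl])
  then show "f x \<in> borel_measurable borel" by (simp add: measurable_cong_sets[OF sets_lborel refl])
qed

lemma stepA:
  fixes X :: "'a \<Rightarrow> 'b::second_countable_topology" and Z Zt Mt M :: "'a \<Rightarrow> real" and qt :: "'b \<Rightarrow> real"
    and fobs :: "'b \<times> real \<Rightarrow> real \<Rightarrow> real" and fMt :: "'b \<Rightarrow> real \<Rightarrow> real" and zval :: real
  assumes P: "prob_space P" and Xm[measurable]: "X \<in> measurable P borel" and Zm[measurable]: "Z \<in> borel_measurable P"
    and Mm[measurable]: "M \<in> borel_measurable P" and Mtm[measurable]: "Mt \<in> borel_measurable P"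
    and Ztdef: "\<forall>\<omega>\<in>space P. Zt \<omega> = indicator {zval} (Z \<omega>)"
    and MtM: "\<forall>\<omega>\<in>space P. Z \<omega> = zval \<longrightarrow> M \<omega> = Mt \<omega>"
    and qtm[measurable]: "qt \<in> borel_measurable borel" and qt0: "\<And>x. 0 \<le> qt x"
    and qpos: "AE \<omega> in P. 0 < qt (X \<omega>)"
    and DN: "\<And>\<phi>. \<phi> \<in> borel_measurable (borel :: ('b \<times> real) measure) \<Longrightarrow>
        (\<integral>\<^sup>+\<omega>. ennreal (Zt \<omega>) * \<phi> (X \<omega>, Mt \<omega>) \<partial>P) = (\<integral>\<^sup>+\<omega>. ennreal (qt (X \<omega>)) * \<phi> (X \<omega>, Mt \<omega>) \<partial>P)"
    and fod: "cond_density_version P (\<lambda>\<omega>. (X \<omega>, Z \<omega>)) M fobs"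
    and fmd: "cond_density_version P X Mt fMt"
  shows "AE \<omega> in P. AE m in lborel. fobs (X \<omega>, zval) m = fMt (X \<omega>) m"
proof -
  interpret prob_space P by fact
  have fom: "(\<lambda>(v, w). fobs v w) \<in> borel_measurable borel" and fo0: "\<And>v w. 0 \<le> fobs v w"
    using fod unfolding cond_density_version_def by auto
  have fmm: "(\<lambda>(v, w). fMt v w) \<in> borel_measurable borel" and fm0: "\<And>v w. 0 \<le> fMt v w"
    using fmd unfolding cond_density_version_def by auto
  have fo2: "(\<lambda>p. fobs (fst p, zval) (snd p)) \<in> borel_measurable (borel \<Otimes>\<^sub>M lborel)"
    by (rule meas_slice2[OF fom])
  have fm2: "(\<lambda>p. fMt (fst p) (snd p)) \<in> borel_measurable (borel \<Otimes>\<^sub>M lborel)"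
    by (rule meas_slice1[OF fmm])
  define G where "G B x = (\<integral>\<^sup>+ m. indicator B m * ennreal (fobs (x, zval) m) \<partial>lborel)" for B x
  define H where "H B x = (\<integral>\<^sup>+ m. indicator B m * ennreal (fMt x m) \<partial>lborel)" for B x
  have Gm: "G B \<in> borel_measurable borel" if "B \<in> sets borel" for B
    unfolding G_def using meas_G[OF fo2 that] by simp
  have Hm: "H B \<in> borel_measurable borel" if "B \<in> sets borel" for B
    unfolding H_def using meas_G[OF fm2 that] by simp
  let ?L = "distr P borel X"
  interpret L: prob_space ?L by (rule prob_space_distr) simp
  have fst_meas: "(\<lambda>p. h (fst p)) \<in> borel_measurable (borel :: ('b \<times> real) measure)"
    if "h \<in> borel_measurable (borel :: 'b measure)" for h :: "'b \<Rightarrow> ennreal"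
    by (rule measurable_compose[OF borel_measurable_fst_comp[OF borel_measurable_id_prod] that])
  have main: "AE \<omega> in P. G B (X \<omega>) = H B (X \<omega>)" if B[measurable]: "B \<in> sets borel" for B
  proof -
    note [measurable] = Gm[OF B] Hm[OF B]
    have eqA: "(\<integral>\<^sup>+\<omega>. ennreal (qt (X \<omega>)) * (indicator A (X \<omega>) * G B (X \<omega>)) \<partial>P) =
        (\<integral>\<^sup>+\<omega>. ennreal (qt (X \<omega>)) * (indicator A (X \<omega>) * H B (X \<omega>)) \<partial>P)"
      if A[measurable]: "A \<in> sets borel" for A
    proof -
      have m1: "(\<lambda>x. indicator A x * G B x) \<in> borel_measurable borel" by measurable
      have "(\<integral>\<^sup>+\<omega>. ennreal (qt (X \<omega>)) * (indicator A (X \<omega>) * G B (X \<omega>)) \<partial>P) =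
          (\<integral>\<^sup>+\<omega>. ennreal (Zt \<omega>) * (indicator A (X \<omega>) * G B (X \<omega>)) \<partial>P)"
        using DN[OF fst_meas[OF m1]] by simp
      also have "\<dots> = (\<integral>\<^sup>+\<omega>. (\<integral>\<^sup>+m. ennreal (fobs (X \<omega>, Z \<omega>) m) *
            (indicator {zval} (snd (X \<omega>, Z \<omega>)) * indicator A (fst (X \<omega>, Z \<omega>)) * indicator B m) \<partial>lborel) \<partial>P)"
      proof (intro nn_integral_cong)
        fix \<omega> assume \<omega>: "\<omega> \<in> space P"
        show "ennreal (Zt \<omega>) * (indicator A (X \<omega>) * G B (X \<omega>)) =
          (\<integral>\<^sup>+m. ennreal (fobs (X \<omega>, Z \<omega>) m) *
            (indicator {zval} (snd (X \<omega>, Z \<omega>)) * indicator A (fst (X \<omega>, Z \<omega>)) * indicator B m) \<partial>lborel)"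
        proof (cases "Z \<omega> = zval")
          case True
          have mm: "(\<lambda>m. indicator B m * ennreal (fobs (X \<omega>, zval) m)) \<in> borel_measurable lborel"
            using slice_meas(2)[OF fo2, of "X \<omega>"] B by (simp add: measurable_cong_sets[OF sets_lborel refl])
          have "ennreal (Zt \<omega>) * (indicator A (X \<omega>) * G B (X \<omega>)) = indicator A (X \<omega>) * G B (X \<omega>)"
            using Ztdef \<omega> True by simp
          also have "\<dots> = (\<integral>\<^sup>+m. indicator A (X \<omega>) * (indicator B m * ennreal (fobs (X \<omega>, zval) m)) \<partial>lborel)"
            unfolding G_def by (rule nn_integral_cmult[symmetric, OF mm])
          also have "\<dots> = (\<integral>\<^sup>+m. ennreal (fobs (X \<omega>, Z \<omega>) m) *
            (indicator {zval} (snd (X \<omega>, Z \<omega>)) * indicator A (fst (X \<omega>, Z \<omega>)) * indicator B m) \<partial>lborel)"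
            using True by (intro nn_integral_cong) (simp add: mult_ac)
          finally show ?thesis .
        next
          case False
          then show ?thesis using Ztdef \<omega> by simp
        qed
      qed
      also have "\<dots> = (\<integral>\<^sup>+\<omega>. indicator {zval} (snd (X \<omega>, Z \<omega>)) * indicator A (fst (X \<omega>, Z \<omega>)) * indicator B (M \<omega>) \<partial>P)"
      proof -
        note [measurable (raw)] = borel_measurable_fst_comp borel_measurable_snd_comp
        note [measurable] = borel_measurable_id_prod
        have mF: "(\<lambda>p. indicator {zval} (snd (fst p)) * indicator A (fst (fst p)) * indicator B (snd p) :: ennreal)
          \<in> borel_measurable (borel :: (('b \<times> real) \<times> real) measure)" by measurable
        from cond_density_nn_integral[OF P fod mF] show ?thesis by simp
      qed
      also have "\<dots> = (\<integral>\<^sup>+\<omega>. ennreal (Zt \<omega>) * (indicator A (fst (X \<omega>, Mt \<omega>)) * indicator B (snd (X \<omega>, Mt \<omega>))) \<partial>P)"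
        using Ztdef MtM by (intro nn_integral_cong) (auto simp: indicator_def)
      also have "\<dots> = (\<integral>\<^sup>+\<omega>. ennreal (qt (X \<omega>)) * (indicator A (fst (X \<omega>, Mt \<omega>)) * indicator B (snd (X \<omega>, Mt \<omega>))) \<partial>P)"
      proof (rule DN[of "\<lambda>p. indicator A (fst p) * indicator B (snd p)"])
        note [measurable (raw)] = borel_measurable_fst_comp borel_measurable_snd_comp
        note [measurable] = borel_measurable_id_prod
        show "(\<lambda>p. indicator A (fst p) * indicator B (snd p) :: ennreal) \<in> borel_measurable (borel :: ('b \<times> real) measure)"
          by measurable
      qed
      also have "\<dots> = (\<integral>\<^sup>+\<omega>. (\<integral>\<^sup>+m. ennreal (fMt (X \<omega>) m) *
            (ennreal (qt (fst (X \<omega>, m))) * (indicator A (fst (X \<omega>, m)) * indicator B (snd (X \<omega>, m)))) \<partial>lborel) \<partial>P)"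
      proof -
        note [measurable (raw)] = borel_measurable_fst_comp borel_measurable_snd_comp
        note [measurable] = borel_measurable_id_prod
        have mF: "(\<lambda>p. ennreal (qt (fst p)) * (indicator A (fst p) * indicator B (snd p))) \<in> borel_measurable (borel :: ('b \<times> real) measure)"
          by measurable
        from cond_density_nn_integral[OF P fmd mF] show ?thesis by simp
      qed
      also have "\<dots> = (\<integral>\<^sup>+\<omega>. ennreal (qt (X \<omega>)) * (indicator A (X \<omega>) * H B (X \<omega>)) \<partial>P)"
      proof (intro nn_integral_cong)
        fix \<omega>
        have mm: "(\<lambda>m. indicator B m * ennreal (fMt (X \<omega>) m)) \<in> borel_measurable lborel"
          using slice_meas(2)[OF fm2, of "X \<omega>"] B by (simp add: measurable_cong_sets[OF sets_lborel refl])
        have "ennreal (qt (X \<omega>)) * (indicator A (X \<omega>) * H B (X \<omega>)) =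
            (\<integral>\<^sup>+m. (ennreal (qt (X \<omega>)) * indicator A (X \<omega>)) * (indicator B m * ennreal (fMt (X \<omega>) m)) \<partial>lborel)"
          unfolding H_def by (subst nn_integral_cmult[OF mm]) (simp add: mult_ac)
        then show "(\<integral>\<^sup>+m. ennreal (fMt (X \<omega>) m) *
            (ennreal (qt (fst (X \<omega>, m))) * (indicator A (fst (X \<omega>, m)) * indicator B (snd (X \<omega>, m)))) \<partial>lborel) =
          ennreal (qt (X \<omega>)) * (indicator A (X \<omega>) * H B (X \<omega>))"
          by (simp add: mult_ac)
      qed
      finally show ?thesis .
    qed
    have "density ?L (\<lambda>x. ennreal (qt x) * G B x) = density ?L (\<lambda>x. ennreal (qt x) * H B x)"
    proof (rule measure_eqI)
      fix A assume "A \<in> sets (density ?L (\<lambda>x. ennreal (qt x) * G B x))"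
      then have A[measurable]: "A \<in> sets borel" by simp
      have "emeasure (density ?L (\<lambda>x. ennreal (qt x) * G B x)) A = (\<integral>\<^sup>+x. ennreal (qt x) * (indicator A x * G B x) \<partial>?L)"
        by (subst emeasure_density) (simp_all add: mult_ac)
      also have "\<dots> = (\<integral>\<^sup>+\<omega>. ennreal (qt (X \<omega>)) * (indicator A (X \<omega>) * G B (X \<omega>)) \<partial>P)"
        by (subst nn_integral_distr) simp_all
      also have "\<dots> = (\<integral>\<^sup>+\<omega>. ennreal (qt (X \<omega>)) * (indicator A (X \<omega>) * H B (X \<omega>)) \<partial>P)" by (rule eqA[OF A])
      also have "\<dots> = (\<integral>\<^sup>+x. ennreal (qt x) * (indicator A x * H B x) \<partial>?L)"
        by (subst nn_integral_distr) simp_all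
      also have "\<dots> = emeasure (density ?L (\<lambda>x. ennreal (qt x) * H B x)) A"
        by (subst emeasure_density) (simp_all add: mult_ac)
      finally show "emeasure (density ?L (\<lambda>x. ennreal (qt x) * G B x)) A = emeasure (density ?L (\<lambda>x. ennreal (qt x) * H B x)) A" .
    qed simp
    then have "AE x in ?L. ennreal (qt x) * G B x = ennreal (qt x) * H B x"
      by (intro sigma_finite_measure.density_unique[OF L.sigma_finite_measure_axioms]) simp_all
    then have "AE \<omega> in P. ennreal (qt (X \<omega>)) * G B (X \<omega>) = ennreal (qt (X \<omega>)) * H B (X \<omega>)"
      by (subst (asm) AE_distr_iff) simp_all
    then show ?thesis using qpos
      by eventually_elim (auto simp: ennreal_mult_cancel_left)
  qed
  have "(\<integral>\<^sup>+\<omega>. H UNIV (X \<omega>) \<partial>P) = (\<integral>\<^sup>+\<omega>. (\<lambda>_. 1) (X \<omega>, Mt \<omega>) \<partial>P)"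
    unfolding H_def using cond_density_nn_integral[OF P fmd, of "\<lambda>_. 1"] by simp
  also have "\<dots> = 1" by (simp add: emeasure_space_1)
  finally have "(\<integral>\<^sup>+\<omega>. H UNIV (X \<omega>) \<partial>P) \<noteq> \<infinity>" by simp
  then have fin: "AE \<omega> in P. H UNIV (X \<omega>) \<noteq> \<infinity>"
    by (intro nn_integral_PInf_AE) (use Hm[of UNIV] in simp_all)
  have allr: "AE \<omega> in P. \<forall>r::rat. G {..real_of_rat r} (X \<omega>) = H {..real_of_rat r} (X \<omega>)"
    by (subst AE_all_countable) (use main in simp)
  have mU: "AE \<omega> in P. G UNIV (X \<omega>) = H UNIV (X \<omega>)" by (rule main) simp
  show ?thesis using allr mU fin
  proof eventually_elim
    case (elim \<omega>)
    show ?case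
    proof (rule density_eq_from_rat)
      show "(\<lambda>m. fobs (X \<omega>, zval) m) \<in> borel_measurable borel" using slice_meas(1)[OF fo2, of "X \<omega>"] by simp
      show "(\<lambda>m. fMt (X \<omega>) m) \<in> borel_measurable borel" using slice_meas(1)[OF fm2, of "X \<omega>"] by simp
      show "\<And>m. 0 \<le> fobs (X \<omega>, zval) m" "\<And>m. 0 \<le> fMt (X \<omega>) m" by (simp_all add: fo0 fm0)
      show "\<And>r::rat. (\<integral>\<^sup>+ m. indicator {..real_of_rat r} m * ennreal (fobs (X \<omega>, zval) m) \<partial>lborel) =
                       (\<integral>\<^sup>+ m. indicator {..real_of_rat r} m * ennreal (fMt (X \<omega>) m) \<partial>lborel)"
        using elim unfolding G_def H_def by simp
      show "(\<integral>\<^sup>+ m. ennreal (fobs (X \<omega>, zval) m) \<partial>lborel) \<noteq> \<infinity>"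
        using elim unfolding G_def H_def by simp
    qed
  qed
qed

lemma AE_fst_lborel:
  assumes "AE x in lborel. P x"
  shows "AE u in (lborel :: (real \<times> real) measure). P (fst u)"
proof -
  from assms obtain N where N: "{x \<in> space lborel. \<not> P x} \<subseteq> N" "N \<in> null_sets lborel"
    by (auto elim!: AE_E simp: null_sets_def)
  have "N \<times> UNIV \<in> null_sets (lborel \<Otimes>\<^sub>M (lborel :: real measure))"
    using N(2) by (intro lborel.times_in_null_sets1) simp_all
  then have NN: "N \<times> UNIV \<in> null_sets (lborel :: (real \<times> real) measure)" by (simp add: lborel_prod)
  show ?thesis by (rule AE_I'[OF NN]) (use N(1) in auto)
qed

lemma AE_snd_lborel:
  assumes "AE x in lborel. P x"
  shows "AE u in (lborel :: (real \<times> real) measure). P (snd u)"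
proof -
  from assms obtain N where N: "{x \<in> space lborel. \<not> P x} \<subseteq> N" "N \<in> null_sets lborel"
    by (auto elim!: AE_E simp: null_sets_def)
  have "UNIV \<times> N \<in> null_sets (lborel \<Otimes>\<^sub>M (lborel :: real measure))"
    using N(2) by (intro lborel.times_in_null_sets2) simp_all
  then have NN: "UNIV \<times> N \<in> null_sets (lborel :: (real \<times> real) measure)" by (simp add: lborel_prod)
  show ?thesis by (rule AE_I'[OF NN]) (use N(1) in auto)
qed

lemma cdf_meas2:
  fixes f :: "'b::second_countable_topology \<Rightarrow> real \<Rightarrow> real"
  assumes fm: "(\<lambda>p. f (fst p) (snd p)) \<in> borel_measurable (borel \<Otimes>\<^sub>M lborel)"
  shows "(\<lambda>p. cond_cdf f (fst p) (snd p)) \<in> borel_measurable (borel :: ('b \<times> real) measure)"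
proof -
  have fm': "(\<lambda>p. f (fst p) (snd p)) \<in> borel_measurable (borel :: ('b \<times> real) measure)"
    using fm unfolding measurable_cong_sets[OF sets_borel_lborel refl] .
  have s1: "(\<lambda>q::(('b \<times> real) \<times> real). snd q) \<in> borel_measurable borel"
    by (rule borel_measurable_snd_comp[OF borel_measurable_id_prod])
  have s2: "(\<lambda>q::(('b \<times> real) \<times> real). snd (fst q)) \<in> borel_measurable borel"
    by (rule borel_measurable_snd_comp[OF borel_measurable_fst_comp[OF borel_measurable_id_prod]])
  have s3: "(\<lambda>q::(('b \<times> real) \<times> real). fst (fst q)) \<in> borel_measurable borel"
    by (rule borel_measurable_fst_comp[OF borel_measurable_fst_comp[OF borel_measurable_id_prod]])
  have "(\<lambda>q::(('b \<times> real) \<times> real). (fst (fst q), snd q)) \<in> borel_measurable borel"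
    by (rule borel_measurable_Pair[OF s3 s1])
  from measurable_compose[OF this fm']
  have m1: "(\<lambda>q. f (fst (fst q)) (snd q)) \<in> borel_measurable (borel :: (('b \<times> real) \<times> real) measure)" by simp
  have "{q \<in> space borel. snd q \<le> snd (fst q)} \<in> sets (borel :: (('b \<times> real) \<times> real) measure)"
    by (rule borel_measurable_le[OF s1 s2])
  then have i1: "(\<lambda>q::(('b \<times> real) \<times> real). indicator {q \<in> space borel. snd q \<le> snd (fst q)} q :: real) \<in> borel_measurable borel"
    by (rule borel_measurable_indicator)
  have mm: "(\<lambda>q::(('b \<times> real) \<times> real). indicator {q \<in> space borel. snd q \<le> snd (fst q)} q * f (fst (fst q)) (snd q)) \<in> borel_measurable borel"
    by (rule borel_measurable_times[OF i1 m1])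
  have eqf: "case_prod (\<lambda>p t. indicator {..snd p} t * f (fst p) t) =
     (\<lambda>q::(('b \<times> real) \<times> real). indicator {q \<in> space borel. snd q \<le> snd (fst q)} q * f (fst (fst q)) (snd q))"
    by (auto simp: fun_eq_iff indicator_def)
  have "case_prod (\<lambda>p t. indicator {..snd p} t * f (fst p) t) \<in> borel_measurable (borel \<Otimes>\<^sub>M lborel)"
    unfolding measurable_cong_sets[OF sets_borel_lborel refl] eqf by (rule mm)
  from lborel.borel_measurable_lebesgue_integral[OF this] show ?thesis
    unfolding cond_cdf_def by simp
qed

lemma kern_meas:
  assumes K: "kernel2 K"
  shows "(\<lambda>u. kern_u K h ustar u) \<in> borel_measurable (borel :: (real \<times> real) measure)"
proof -
  note [measurable (raw)] = borel_measurable_fst_comp borel_measurable_snd_comp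
  note [measurable] = borel_measurable_id_prod
  have Km: "(\<lambda>(a, b). K a b) \<in> borel_measurable borel" using K unfolding kernel2_def by auto
  have "(\<lambda>u::real\<times>real. ((fst u - fst ustar) / h, (snd u - snd ustar) / h)) \<in> borel_measurable borel" by measurable
  from measurable_compose[OF this Km]
  have "(\<lambda>u::real\<times>real. K ((fst u - fst ustar) / h) ((snd u - snd ustar) / h)) \<in> borel_measurable borel" by simp
  then show ?thesis unfolding kern_u_def by measurable
qed

lemma kern_bound:
  assumes K: "kernel2 K"
  shows "\<exists>C. \<forall>u. \<bar>kern_u K h ustar u\<bar> \<le> C"
proof -
  obtain B where B: "\<And>a b. \<bar>K a b\<bar> \<le> B" using K unfolding kernel2_def by auto
  have "\<bar>kern_u K h ustar u\<bar> \<le> B / h\<^sup>2" for u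
    unfolding kern_u_def using B by (simp add: abs_div divide_right_mono)
  then show ?thesis by blast
qed

lemma weighted_law_nn:
  fixes X :: "'a \<Rightarrow> 'b::second_countable_topology" and W :: "'a \<Rightarrow> 'c::second_countable_topology"
    and a b :: "'a \<Rightarrow> real" and h :: "'b \<times> 'c \<Rightarrow> ennreal"
  assumes D: "distr (density P (\<lambda>\<omega>. ennreal (a \<omega>))) borel (\<lambda>\<omega>. (X \<omega>, W \<omega>)) =
         distr (density P (\<lambda>\<omega>. ennreal (b \<omega>))) borel (\<lambda>\<omega>. (X \<omega>, W \<omega>))"
    and Xm[measurable]: "X \<in> measurable P borel" and Wm[measurable]: "W \<in> measurable P borel"
    and am[measurable]: "a \<in> borel_measurable P" and bm[measurable]: "b \<in> borel_measurable P"
    and hm[measurable]: "h \<in> borel_measurable borel"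
  shows "(\<integral>\<^sup>+\<omega>. ennreal (a \<omega>) * h (X \<omega>, W \<omega>) \<partial>P) = (\<integral>\<^sup>+\<omega>. ennreal (b \<omega>) * h (X \<omega>, W \<omega>) \<partial>P)"
proof -
  have I: "integral\<^sup>N (distr (density P (\<lambda>\<omega>. ennreal (c \<omega>))) borel (\<lambda>\<omega>. (X \<omega>, W \<omega>))) h = (\<integral>\<^sup>+\<omega>. ennreal (c \<omega>) * h (X \<omega>, W \<omega>) \<partial>P)"
    if [measurable]: "c \<in> borel_measurable P" for c
    by (subst nn_integral_distr) (simp_all add: nn_integral_density)
  show ?thesis using I[OF am] I[OF bm] D by simp
qed

lemma inner_meas:
  fixes G :: "'b::second_countable_topology \<times> 'w::euclidean_space \<Rightarrow> real"
  assumes G: "G \<in> borel_measurable borel" and Xm: "X \<in> measurable P borel"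
  shows "(\<lambda>\<omega>. \<integral>u. G (X \<omega>, u) \<partial>lborel) \<in> borel_measurable P"
    and "(\<lambda>u. G (x, u)) \<in> borel_measurable lborel"
proof -
  have G2: "case_prod (\<lambda>x u. G (x, u)) \<in> borel_measurable (borel \<Otimes>\<^sub>M lborel)"
    unfolding measurable_cong_sets[OF sets_borel_lborel refl] using G by simp
  from lborel.borel_measurable_lebesgue_integral[OF G2]
  have "(\<lambda>x. \<integral>u. G (x, u) \<partial>lborel) \<in> borel_measurable borel" .
  from measurable_compose[OF Xm this] show "(\<lambda>\<omega>. \<integral>u. G (X \<omega>, u) \<partial>lborel) \<in> borel_measurable P" .
  have "(\<lambda>u. (case_prod (\<lambda>x u. G (x, u))) (x, u)) \<in> borel_measurable lborel"
    by (rule measurable_Pair2[OF G2]) simp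
  then show "(\<lambda>u. G (x, u)) \<in> borel_measurable lborel" by simp
qed

lemma CE_meas:
  fixes fobs :: "'b::second_countable_topology \<times> real \<Rightarrow> real \<Rightarrow> real"
  assumes fom: "(\<lambda>(v, w). fobs v w) \<in> borel_measurable borel" and cm: "(\<lambda>(s, t). c s t) \<in> borel_measurable borel"
  shows "(\<lambda>p::'b \<times> real \<times> real. copula_e c (\<lambda>x. fobs (x, 1)) (\<lambda>x. fobs (x, 0)) (fst p) (snd p)) \<in> borel_measurable borel"
proof -
  have s1: "(\<lambda>p. fobs (fst p, z) (snd p)) \<in> borel_measurable (borel :: ('b \<times> real) measure)" for z
    using meas_slice2[OF fom, of z] unfolding measurable_cong_sets[OF sets_borel_lborel refl] .
  have c1: "(\<lambda>p. cond_cdf (\<lambda>x. fobs (x, z)) (fst p) (snd p)) \<in> borel_measurable (borel :: ('b \<times> real) measure)" for z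
    using cdf_meas2[of "\<lambda>x. fobs (x, z)"] meas_slice2[OF fom, of z] by simp
  have pA: "(\<lambda>p::'b \<times> real \<times> real. (fst p, fst (snd p))) \<in> borel_measurable borel"
    by (rule borel_measurable_Pair[OF borel_measurable_fst_comp[OF borel_measurable_id_prod]
          borel_measurable_fst_comp[OF borel_measurable_snd_comp[OF borel_measurable_id_prod]]])
  have pB: "(\<lambda>p::'b \<times> real \<times> real. (fst p, snd (snd p))) \<in> borel_measurable borel"
    by (rule borel_measurable_Pair[OF borel_measurable_fst_comp[OF borel_measurable_id_prod]
          borel_measurable_snd_comp[OF borel_measurable_snd_comp[OF borel_measurable_id_prod]]])
  have a1: "(\<lambda>p::'b \<times> real \<times> real. cond_cdf (\<lambda>x. fobs (x, 1)) (fst p) (fst (snd p))) \<in> borel_measurable borel"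
    using measurable_compose[OF pA c1[of 1]] by simp
  have a0: "(\<lambda>p::'b \<times> real \<times> real. cond_cdf (\<lambda>x. fobs (x, 0)) (fst p) (snd (snd p))) \<in> borel_measurable borel"
    using measurable_compose[OF pB c1[of 0]] by simp
  have b1: "(\<lambda>p::'b \<times> real \<times> real. fobs (fst p, 1) (fst (snd p))) \<in> borel_measurable borel"
    using measurable_compose[OF pA s1[of 1]] by simp
  have b0: "(\<lambda>p::'b \<times> real \<times> real. fobs (fst p, 0) (snd (snd p))) \<in> borel_measurable borel"
    using measurable_compose[OF pB s1[of 0]] by simp
  have cc: "(\<lambda>p::'b \<times> real \<times> real. c (cond_cdf (\<lambda>x. fobs (x, 1)) (fst p) (fst (snd p))) (cond_cdf (\<lambda>x. fobs (x, 0)) (fst p) (snd (snd p)))) \<in> borel_measurable borel"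
    using measurable_compose[OF borel_measurable_Pair[OF a1 a0] cm] by simp
  show ?thesis unfolding copula_e_def
    by (intro borel_measurable_times cc b1 b0)
qed

theorem theorem2:
  fixes P :: "'a measure"
    and X :: "'a \<Rightarrow> real ^ 'd" and Xset :: "(real ^ 'd) set"
    and Z M1 M0 Y1 Y0 :: "'a \<Rightarrow> real"
    and mu :: "(real ^ 'd) \<times> real \<times> real \<Rightarrow> real"
    and e :: "real ^ 'd \<Rightarrow> real \<times> real \<Rightarrow> real"
    and fM1 fM0 :: "real ^ 'd \<Rightarrow> real \<Rightarrow> real"
    and fobs :: "(real ^ 'd) \<times> real \<Rightarrow> real \<Rightarrow> real"
    and c K :: "real \<Rightarrow> real \<Rightarrow> real"
    and h :: real and ustar :: "real \<times> real"
  assumes P: "prob_space P"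
    and X_meas: "X \<in> measurable P borel" and X_in: "\<forall>\<omega> \<in> space P. X \<omega> \<in> Xset"
    and Z_meas: "Z \<in> borel_measurable P" and Z_bin: "\<forall>\<omega> \<in> space P. Z \<omega> \<in> {0, 1}"
    and M1_meas: "M1 \<in> borel_measurable P" and M0_meas: "M0 \<in> borel_measurable P"
    and Y1_int: "integrable P Y1" and Y0_int: "integrable P Y0"
    and overlap: "AE \<omega> in P. 0 < real_cond_exp P (vimage_algebra (space P) X borel) Z \<omega> \<and>
                              real_cond_exp P (vimage_algebra (space P) X borel) Z \<omega> < 1"
    and A1: "cond_indep P X Z (\<lambda>\<omega>. (M0 \<omega>, M1 \<omega>, Y0 \<omega>, Y1 \<omega>))"
    and A2_1: "\<exists>g. cond_exp_version P (\<lambda>\<omega>. (X \<omega>, M1 \<omega>)) Y1 g \<and>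
                   cond_exp_version P (\<lambda>\<omega>. (X \<omega>, M1 \<omega>, M0 \<omega>)) Y1 (\<lambda>(x, m1, m0). g (x, m1))"
    and A2_0: "\<exists>g. cond_exp_version P (\<lambda>\<omega>. (X \<omega>, M0 \<omega>)) Y0 g \<and>
                   cond_exp_version P (\<lambda>\<omega>. (X \<omega>, M1 \<omega>, M0 \<omega>)) Y0 (\<lambda>(x, m1, m0). g (x, m0))"
    and e_dens: "cond_density_version P X (\<lambda>\<omega>. (M1 \<omega>, M0 \<omega>)) e"
    and fM1_dens: "cond_density_version P X M1 fM1"
    and fM0_dens: "cond_density_version P X M0 fM0"
    and copula: "copula_density c"
    and A3: "\<forall>x \<in> Xset. \<forall>u. e x u = copula_e c fM1 fM0 x u"
    and mu_def: "cond_exp_version P (\<lambda>\<omega>. (X \<omega>, Z \<omega>, Z \<omega> * M1 \<omega> + (1 - Z \<omega>) * M0 \<omega>))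
                   (\<lambda>\<omega>. Z \<omega> * Y1 \<omega> + (1 - Z \<omega>) * Y0 \<omega>) mu"
    and fobs_dens: "cond_density_version P (\<lambda>\<omega>. (X \<omega>, Z \<omega>))
                      (\<lambda>\<omega>. Z \<omega> * M1 \<omega> + (1 - Z \<omega>) * M0 \<omega>) fobs"
    and K: "kernel2 K" and h: "h > 0"
  shows "(\<integral>\<omega>. (mu (X \<omega>, 1, M1 \<omega>) - mu (X \<omega>, 0, M0 \<omega>)) * kern_u K h ustar (M1 \<omega>, M0 \<omega>) \<partial>P)
           / (\<integral>\<omega>. kern_u K h ustar (M1 \<omega>, M0 \<omega>) \<partial>P)
         = (\<integral>\<omega>. (\<integral>u. (mu (X \<omega>, 1, fst u) - mu (X \<omega>, 0, snd u))
                       * copula_e c (\<lambda>x. fobs (x, 1)) (\<lambda>x. fobs (x, 0)) (X \<omega>) u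
                       * kern_u K h ustar u \<partial>lborel) \<partial>P)
           / (\<integral>\<omega>. (\<integral>u. copula_e c (\<lambda>x. fobs (x, 1)) (\<lambda>x. fobs (x, 0)) (X \<omega>) u
                       * kern_u K h ustar u \<partial>lborel) \<partial>P)"
proof -
  interpret prob_space P by (rule P)
  note [measurable] = X_meas Z_meas M1_meas M0_meas
  have Y1m[measurable]: "Y1 \<in> borel_measurable P" using Y1_int by auto
  have Y0m[measurable]: "Y0 \<in> borel_measurable P" using Y0_int by auto
  let ?F = "vimage_algebra (space P) X borel"
  obtain q0 where q0m[measurable]: "q0 \<in> borel_measurable borel" and q00: "\<forall>x. 0 \<le> q0 x"
    and pq0: "AE \<omega> in P. real_cond_exp P ?F Z \<omega> = q0 (X \<omega>)"
    using q_exists[OF P X_meas Z_meas Z_bin] by blast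
  define q where "q x = min 1 (q0 x)" for x
  have qm[measurable]: "q \<in> borel_measurable borel" unfolding q_def by measurable
  have q01: "\<And>x. 0 \<le> q x \<and> q x \<le> 1" using q00 by (auto simp: q_def)
  have pq: "AE \<omega> in P. real_cond_exp P ?F Z \<omega> = q (X \<omega>)"
    using pq0 overlap by eventually_elim (auto simp: q_def min_def)
  have qpos: "AE \<omega> in P. 0 < q (X \<omega>)" using pq overlap by eventually_elim auto
  have qlt: "AE \<omega> in P. q (X \<omega>) < 1" using pq overlap by eventually_elim auto
  define W where "W = (\<lambda>\<omega>. (M0 \<omega>, M1 \<omega>, Y0 \<omega>, Y1 \<omega>))"
  have Wm[measurable]: "W \<in> borel_measurable P" unfolding W_def by measurable
  have Z01: "\<And>\<omega>. \<omega> \<in> space P \<Longrightarrow> 0 \<le> Z \<omega> \<and> Z \<omega> \<le> 1" using Z_bin by auto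
  have Zi: "integrable P Z" by (rule integrable_const_bound[where B=1]) (use Z01 in auto)
  have qXi: "integrable P (\<lambda>\<omega>. q (X \<omega>))" by (rule integrable_const_bound[where B=1]) (use q01 in auto)
  have rect1: "(\<integral>\<omega>. Z \<omega> * (indicator A (X \<omega>) * indicator B (W \<omega>)) \<partial>P) =
      (\<integral>\<omega>. q (X \<omega>) * (indicator A (X \<omega>) * indicator B (W \<omega>)) \<partial>P)"
    if "A \<in> sets borel" "B \<in> sets borel" for A B
    by (rule indep_rect[OF P X_meas Z_meas Z_bin Wm A1[folded W_def] qm pq that])
  have rect0: "(\<integral>\<omega>. (1 - Z \<omega>) * (indicator A (X \<omega>) * indicator B (W \<omega>)) \<partial>P) =
      (\<integral>\<omega>. (1 - q (X \<omega>)) * (indicator A (X \<omega>) * indicator B (W \<omega>)) \<partial>P)"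
    if AB: "A \<in> sets borel" "B \<in> sets borel" for A B
  proof -
    have [measurable]: "A \<in> sets borel" "B \<in> sets borel" using AB by auto
    let ?g = "\<lambda>\<omega>. indicator A (X \<omega>) * indicator B (W \<omega>) :: real"
    have gi: "integrable P ?g" by (rule integrable_const_bound[where B=1]) (auto simp: indicator_def)
    have zi: "integrable P (\<lambda>\<omega>. Z \<omega> * ?g \<omega>)"
      by (rule integrable_const_bound[where B=1]) (use Z01 in \<open>auto simp: indicator_def\<close>)
    have qi: "integrable P (\<lambda>\<omega>. q (X \<omega>) * ?g \<omega>)"
      by (rule integrable_const_bound[where B=1]) (use q01 in \<open>auto simp: indicator_def abs_mult intro: mult_le_one\<close>)
    have "(\<integral>\<omega>. (1 - Z \<omega>) * ?g \<omega> \<partial>P) = (\<integral>\<omega>. ?g \<omega> - Z \<omega> * ?g \<omega> \<partial>P)" by (simp add: left_diff_distrib)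
    also have "\<dots> = (\<integral>\<omega>. ?g \<omega> \<partial>P) - (\<integral>\<omega>. Z \<omega> * ?g \<omega> \<partial>P)" using gi zi by simp
    also have "\<dots> = (\<integral>\<omega>. ?g \<omega> \<partial>P) - (\<integral>\<omega>. q (X \<omega>) * ?g \<omega> \<partial>P)" using rect1[OF AB] by simp
    also have "\<dots> = (\<integral>\<omega>. ?g \<omega> - q (X \<omega>) * ?g \<omega> \<partial>P)" using gi qi by simp
    also have "\<dots> = (\<integral>\<omega>. (1 - q (X \<omega>)) * ?g \<omega> \<partial>P)" by (simp add: left_diff_distrib)
    finally show ?thesis .
  qed
  have D1: "distr (density P (\<lambda>\<omega>. ennreal (Z \<omega>))) borel (\<lambda>\<omega>. (X \<omega>, W \<omega>)) =
         distr (density P (\<lambda>\<omega>. ennreal (q (X \<omega>)))) borel (\<lambda>\<omega>. (X \<omega>, W \<omega>))"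
    by (rule weighted_law_eq[OF P X_meas Wm Zi qXi _ _ rect1]) (use Z01 q01 in \<open>auto intro!: AE_I2\<close>)
  have Z0i: "integrable P (\<lambda>\<omega>. 1 - Z \<omega>)" using Zi by simp
  have q0Xi: "integrable P (\<lambda>\<omega>. 1 - q (X \<omega>))" using qXi by simp
  have D0: "distr (density P (\<lambda>\<omega>. ennreal (1 - Z \<omega>))) borel (\<lambda>\<omega>. (X \<omega>, W \<omega>)) =
         distr (density P (\<lambda>\<omega>. ennreal (1 - q (X \<omega>)))) borel (\<lambda>\<omega>. (X \<omega>, W \<omega>))"
    by (rule weighted_law_eq[OF P X_meas Wm Z0i q0Xi _ _ rect0]) (use Z01 q01 in \<open>auto intro!: AE_I2\<close>)
  have Zbin': "\<And>\<omega>. \<omega> \<in> space P \<Longrightarrow> Z \<omega> = 0 \<or> Z \<omega> = 1" using Z_bin by auto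
  have LI1: "(\<integral>\<omega>. Z \<omega> * hh (X \<omega>, M1 \<omega>, Y1 \<omega>) \<partial>P) = (\<integral>\<omega>. q (X \<omega>) * hh (X \<omega>, M1 \<omega>, Y1 \<omega>) \<partial>P)"
    if hm: "hh \<in> borel_measurable borel" for hh :: "(real ^ 'd) \<times> real \<times> real \<Rightarrow> real"
  proof -
    have g: "(\<lambda>p::(real^'d) \<times> real \<times> real \<times> real \<times> real. (fst p, fst (snd (snd p)), snd (snd (snd (snd p))))) \<in> borel_measurable borel"
    proof -
      note [measurable (raw)] = borel_measurable_fst_comp borel_measurable_snd_comp
      note [measurable] = borel_measurable_id_prod
      show ?thesis by measurable
    qed
    from weighted_law_integral(1)[OF D1 X_meas Wm Z_meas _ _ _ measurable_compose[OF g hm]]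
    show ?thesis using Z01 q01 by (simp add: W_def AE_I2)
  qed
  have LI0: "(\<integral>\<omega>. (1 - Z \<omega>) * hh (X \<omega>, M0 \<omega>, Y0 \<omega>) \<partial>P) = (\<integral>\<omega>. (1 - q (X \<omega>)) * hh (X \<omega>, M0 \<omega>, Y0 \<omega>) \<partial>P)"
    if hm: "hh \<in> borel_measurable borel" for hh :: "(real ^ 'd) \<times> real \<times> real \<Rightarrow> real"
  proof -
    have g: "(\<lambda>p::(real^'d) \<times> real \<times> real \<times> real \<times> real. (fst p, fst (snd p), fst (snd (snd (snd p))))) \<in> borel_measurable borel"
    proof -
      note [measurable (raw)] = borel_measurable_fst_comp borel_measurable_snd_comp
      note [measurable] = borel_measurable_id_prod
      show ?thesis by measurable
    qed
    from weighted_law_integral(1)[OF D0 X_meas Wm _ _ _ _ measurable_compose[OF g hm]]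
    show ?thesis using Z01 q01 by (simp add: W_def AE_I2)
  qed
  have DN1: "(\<integral>\<^sup>+\<omega>. ennreal (Z \<omega>) * \<phi> (X \<omega>, M1 \<omega>) \<partial>P) = (\<integral>\<^sup>+\<omega>. ennreal (q (X \<omega>)) * \<phi> (X \<omega>, M1 \<omega>) \<partial>P)"
    if hm: "\<phi> \<in> borel_measurable borel" for \<phi> :: "(real ^ 'd) \<times> real \<Rightarrow> ennreal"
  proof -
    have g: "(\<lambda>p::(real^'d) \<times> real \<times> real \<times> real \<times> real. (fst p, fst (snd (snd p)))) \<in> borel_measurable borel"
    proof -
      note [measurable (raw)] = borel_measurable_fst_comp borel_measurable_snd_comp
      note [measurable] = borel_measurable_id_prod
      show ?thesis by measurable
    qed
    from weighted_law_nn[OF D1 X_meas Wm Z_meas _ measurable_compose[OF g hm]]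
    show ?thesis by (simp add: W_def)
  qed
  have DN0: "(\<integral>\<^sup>+\<omega>. ennreal (1 - Z \<omega>) * \<phi> (X \<omega>, M0 \<omega>) \<partial>P) = (\<integral>\<^sup>+\<omega>. ennreal (1 - q (X \<omega>)) * \<phi> (X \<omega>, M0 \<omega>) \<partial>P)"
    if hm: "\<phi> \<in> borel_measurable borel" for \<phi> :: "(real ^ 'd) \<times> real \<Rightarrow> ennreal"
  proof -
    have g: "(\<lambda>p::(real^'d) \<times> real \<times> real \<times> real \<times> real. (fst p, fst (snd p))) \<in> borel_measurable borel"
    proof -
      note [measurable (raw)] = borel_measurable_fst_comp borel_measurable_snd_comp
      note [measurable] = borel_measurable_id_prod
      show ?thesis by measurable
    qed
    from weighted_law_nn[OF D0 X_meas Wm _ _ measurable_compose[OF g hm]]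
    show ?thesis by (simp add: W_def)
  qed
  define Mo where "Mo = (\<lambda>\<omega>. Z \<omega> * M1 \<omega> + (1 - Z \<omega>) * M0 \<omega>)"
  define Yo where "Yo = (\<lambda>\<omega>. Z \<omega> * Y1 \<omega> + (1 - Z \<omega>) * Y0 \<omega>)"
  have mu_d: "cond_exp_version P (\<lambda>\<omega>. (X \<omega>, Z \<omega>, Mo \<omega>)) Yo mu"
    using mu_def unfolding Mo_def Yo_def .
  have mum[measurable]: "mu \<in> borel_measurable borel" and muVi: "integrable P (\<lambda>\<omega>. mu (X \<omega>, Z \<omega>, Mo \<omega>))"
    and mueq: "\<And>S. S \<in> sets borel \<Longrightarrow> (\<integral>\<omega>. indicator S (X \<omega>, Z \<omega>, Mo \<omega>) * Yo \<omega> \<partial>P) =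
        (\<integral>\<omega>. indicator S (X \<omega>, Z \<omega>, Mo \<omega>) * mu (X \<omega>, Z \<omega>, Mo \<omega>) \<partial>P)"
    using mu_d unfolding cond_exp_version_def by auto
  have pr1: "(\<lambda>t::(real^'d) \<times> real \<times> real. (fst t, snd (snd t))) \<in> borel_measurable borel"
    and pr2: "(\<lambda>t::(real^'d) \<times> real \<times> real. fst (snd t)) \<in> borel_measurable borel"
    and pr3: "(\<lambda>p::(real^'d) \<times> real. (fst p, zz, snd p)) \<in> borel_measurable borel"
  for zz :: real
  proof -
    note [measurable (raw)] = borel_measurable_fst_comp borel_measurable_snd_comp
    note [measurable] = borel_measurable_id_prod
    show "(\<lambda>t::(real^'d) \<times> real \<times> real. (fst t, snd (snd t))) \<in> borel_measurable borel" by measurable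
    show "(\<lambda>t::(real^'d) \<times> real \<times> real. fst (snd t)) \<in> borel_measurable borel" by measurable
    show "(\<lambda>p::(real^'d) \<times> real. (fst p, zz, snd p)) \<in> borel_measurable borel" by measurable
  qed
  have key: "(\<integral>\<omega>. indicator {zz} (Z \<omega>) * indicator S (X \<omega>, Mt \<omega>) * Yt \<omega> \<partial>P) =
      (\<integral>\<omega>. indicator {zz} (Z \<omega>) * indicator S (X \<omega>, Mt \<omega>) * mu (X \<omega>, zz, Mt \<omega>) \<partial>P)"
    if S: "S \<in> sets borel" and MtM: "\<And>\<omega>. \<omega> \<in> space P \<Longrightarrow> Z \<omega> = zz \<Longrightarrow> Mo \<omega> = Mt \<omega> \<and> Yo \<omega> = Yt \<omega>"
    for S zz and Mt Yt :: "'a \<Rightarrow> real"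
  proof -
    define S' where "S' = ((\<lambda>t::(real^'d) \<times> real \<times> real. (fst t, snd (snd t))) -` S \<inter> space borel) \<inter>
       ((\<lambda>t::(real^'d) \<times> real \<times> real. fst (snd t)) -` {zz} \<inter> space borel)"
    have S': "S' \<in> sets borel" unfolding S'_def
      by (intro sets.Int measurable_sets[OF pr1 S] measurable_sets[OF pr2]) simp
    have i1: "indicator S' (X \<omega>, Z \<omega>, Mo \<omega>) * Yo \<omega> = indicator {zz} (Z \<omega>) * indicator S (X \<omega>, Mt \<omega>) * Yt \<omega>"
      and i2: "indicator S' (X \<omega>, Z \<omega>, Mo \<omega>) * mu (X \<omega>, Z \<omega>, Mo \<omega>) =
          indicator {zz} (Z \<omega>) * indicator S (X \<omega>, Mt \<omega>) * mu (X \<omega>, zz, Mt \<omega>)"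
      if "\<omega> \<in> space P" for \<omega>
      using MtM[OF that] by (auto simp: S'_def indicator_def)
    have "(\<integral>\<omega>. indicator {zz} (Z \<omega>) * indicator S (X \<omega>, Mt \<omega>) * Yt \<omega> \<partial>P) =
        (\<integral>\<omega>. indicator S' (X \<omega>, Z \<omega>, Mo \<omega>) * Yo \<omega> \<partial>P)"
      using i1 by (intro Bochner_Integration.integral_cong) auto
    also have "\<dots> = (\<integral>\<omega>. indicator S' (X \<omega>, Z \<omega>, Mo \<omega>) * mu (X \<omega>, Z \<omega>, Mo \<omega>) \<partial>P)"
      by (rule mueq[OF S'])
    also have "\<dots> = (\<integral>\<omega>. indicator {zz} (Z \<omega>) * indicator S (X \<omega>, Mt \<omega>) * mu (X \<omega>, zz, Mt \<omega>) \<partial>P)"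
      using i2 by (intro Bochner_Integration.integral_cong) auto
    finally show ?thesis .
  qed
  have Moeq1: "\<And>\<omega>. \<omega> \<in> space P \<Longrightarrow> Z \<omega> = 1 \<Longrightarrow> Mo \<omega> = M1 \<omega> \<and> Yo \<omega> = Y1 \<omega>"
    by (simp add: Mo_def Yo_def)
  have Moeq0: "\<And>\<omega>. \<omega> \<in> space P \<Longrightarrow> Z \<omega> = 0 \<Longrightarrow> Mo \<omega> = M0 \<omega> \<and> Yo \<omega> = Y0 \<omega>"
    by (simp add: Mo_def Yo_def)
  have ind1: "\<And>\<omega>. \<omega> \<in> space P \<Longrightarrow> indicator {1} (Z \<omega>) = Z \<omega>" using Zbin' by (auto simp: indicator_def)
  have ind0: "\<And>\<omega>. \<omega> \<in> space P \<Longrightarrow> indicator {0} (Z \<omega>) = 1 - Z \<omega>" using Zbin' by (auto simp: indicator_def)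
  obtain g1 where g1a: "cond_exp_version P (\<lambda>\<omega>. (X \<omega>, M1 \<omega>)) Y1 g1" using A2_1 by blast
  obtain g0 where g0a: "cond_exp_version P (\<lambda>\<omega>. (X \<omega>, M0 \<omega>)) Y0 g0" using A2_0 by blast
  have m1m: "(\<lambda>p. mu (fst p, 1, snd p)) \<in> borel_measurable borel" by (rule measurable_compose[OF pr3 mum])
  have m0m: "(\<lambda>p. mu (fst p, 0, snd p)) \<in> borel_measurable borel" by (rule measurable_compose[OF pr3 mum])
  have ZmuV: "integrable P (\<lambda>\<omega>. w \<omega> * mu (X \<omega>, Z \<omega>, Mo \<omega>))"
    if "w \<in> borel_measurable P" "\<And>\<omega>. \<omega> \<in> space P \<Longrightarrow> \<bar>w \<omega>\<bar> \<le> 1" for w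
  proof (rule Bochner_Integration.integrable_bound[OF muVi])
    show "(\<lambda>\<omega>. w \<omega> * mu (X \<omega>, Z \<omega>, Mo \<omega>)) \<in> borel_measurable P" using that(1) unfolding Mo_def by measurable
    show "AE \<omega> in P. norm (w \<omega> * mu (X \<omega>, Z \<omega>, Mo \<omega>)) \<le> norm (mu (X \<omega>, Z \<omega>, Mo \<omega>))"
      using that(2) by (intro AE_I2) (auto simp: abs_mult intro: mult_left_le_one_le)
  qed
  have B1: "AE \<omega> in P. mu (X \<omega>, 1, M1 \<omega>) = g1 (X \<omega>, M1 \<omega>)"
  proof -
    have "AE \<omega> in P. (\<lambda>p. mu (fst p, 1, snd p)) (X \<omega>, M1 \<omega>) = g1 (X \<omega>, M1 \<omega>)"
    proof (rule stepB[OF P X_meas M1_meas Y1_int Z_meas Z_bin qm q01 qpos _ g1a m1m])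
      show "\<And>hh. hh \<in> borel_measurable borel \<Longrightarrow> (\<integral>\<omega>. Z \<omega> * hh (X \<omega>, M1 \<omega>, Y1 \<omega>) \<partial>P) = (\<integral>\<omega>. q (X \<omega>) * hh (X \<omega>, M1 \<omega>, Y1 \<omega>) \<partial>P)"
        by (rule LI1)
      have "integrable P (\<lambda>\<omega>. Z \<omega> * mu (X \<omega>, Z \<omega>, Mo \<omega>))" by (rule ZmuV) (use Z01 in auto)
      moreover have "\<And>\<omega>. \<omega> \<in> space P \<Longrightarrow> Z \<omega> * mu (X \<omega>, Z \<omega>, Mo \<omega>) = Z \<omega> * mu (X \<omega>, 1, M1 \<omega>)"
        using Zbin' Moeq1 by force
      ultimately show "integrable P (\<lambda>\<omega>. Z \<omega> * (\<lambda>p. mu (fst p, 1, snd p)) (X \<omega>, M1 \<omega>))"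
        by (simp cong: Bochner_Integration.integrable_cong)
      fix S :: "((real^'d) \<times> real) set" assume S: "S \<in> sets borel"
      have k: "(\<integral>\<omega>. indicator {1} (Z \<omega>) * indicator S (X \<omega>, M1 \<omega>) * Y1 \<omega> \<partial>P) =
        (\<integral>\<omega>. indicator {1} (Z \<omega>) * indicator S (X \<omega>, M1 \<omega>) * mu (X \<omega>, 1, M1 \<omega>) \<partial>P)"
        by (rule key[of S 1 M1 Y1, OF S Moeq1])
      have "(\<integral>\<omega>. Z \<omega> * indicator S (X \<omega>, M1 \<omega>) * Y1 \<omega> \<partial>P) =
          (\<integral>\<omega>. indicator {1} (Z \<omega>) * indicator S (X \<omega>, M1 \<omega>) * Y1 \<omega> \<partial>P)"
        using ind1 by (intro Bochner_Integration.integral_cong) auto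
      also have "\<dots> = (\<integral>\<omega>. indicator {1} (Z \<omega>) * indicator S (X \<omega>, M1 \<omega>) * mu (X \<omega>, 1, M1 \<omega>) \<partial>P)" by (rule k)
      also have "\<dots> = (\<integral>\<omega>. Z \<omega> * indicator S (X \<omega>, M1 \<omega>) * (\<lambda>p. mu (fst p, 1, snd p)) (X \<omega>, M1 \<omega>) \<partial>P)"
        using ind1 by (intro Bochner_Integration.integral_cong) auto
      finally show "(\<integral>\<omega>. Z \<omega> * indicator S (X \<omega>, M1 \<omega>) * Y1 \<omega> \<partial>P) =
          (\<integral>\<omega>. Z \<omega> * indicator S (X \<omega>, M1 \<omega>) * (\<lambda>p. mu (fst p, 1, snd p)) (X \<omega>, M1 \<omega>) \<partial>P)" .
    qed
    then show ?thesis by simp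
  qed
  have B0: "AE \<omega> in P. mu (X \<omega>, 0, M0 \<omega>) = g0 (X \<omega>, M0 \<omega>)"
  proof -
    have Zb0: "\<forall>\<omega>\<in>space P. 1 - Z \<omega> \<in> {0, 1}" using Zbin' by auto
    have qm0: "(\<lambda>x. 1 - q x) \<in> borel_measurable borel" by measurable
    have q010: "\<And>x. 0 \<le> 1 - q x \<and> 1 - q x \<le> 1" using q01 by auto
    have qpos0: "AE \<omega> in P. 0 < 1 - q (X \<omega>)" using qlt by eventually_elim simp
    have Z0m: "(\<lambda>\<omega>. 1 - Z \<omega>) \<in> borel_measurable P" by measurable
    have "AE \<omega> in P. (\<lambda>p. mu (fst p, 0, snd p)) (X \<omega>, M0 \<omega>) = g0 (X \<omega>, M0 \<omega>)"
    proof (rule stepB[OF P X_meas M0_meas Y0_int Z0m Zb0 qm0 q010 qpos0 _ g0a m0m])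
      show "\<And>hh. hh \<in> borel_measurable borel \<Longrightarrow> (\<integral>\<omega>. (1 - Z \<omega>) * hh (X \<omega>, M0 \<omega>, Y0 \<omega>) \<partial>P) = (\<integral>\<omega>. (1 - q (X \<omega>)) * hh (X \<omega>, M0 \<omega>, Y0 \<omega>) \<partial>P)"
        by (rule LI0)
      have "integrable P (\<lambda>\<omega>. (1 - Z \<omega>) * mu (X \<omega>, Z \<omega>, Mo \<omega>))" by (rule ZmuV) (use Z01 in auto)
      moreover have "\<And>\<omega>. \<omega> \<in> space P \<Longrightarrow> (1 - Z \<omega>) * mu (X \<omega>, Z \<omega>, Mo \<omega>) = (1 - Z \<omega>) * mu (X \<omega>, 0, M0 \<omega>)"
        using Zbin' Moeq0 by force
      ultimately show "integrable P (\<lambda>\<omega>. (1 - Z \<omega>) * (\<lambda>p. mu (fst p, 0, snd p)) (X \<omega>, M0 \<omega>))"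
        by (simp cong: Bochner_Integration.integrable_cong)
      fix S :: "((real^'d) \<times> real) set" assume S: "S \<in> sets borel"
      have k: "(\<integral>\<omega>. indicator {0} (Z \<omega>) * indicator S (X \<omega>, M0 \<omega>) * Y0 \<omega> \<partial>P) =
        (\<integral>\<omega>. indicator {0} (Z \<omega>) * indicator S (X \<omega>, M0 \<omega>) * mu (X \<omega>, 0, M0 \<omega>) \<partial>P)"
        by (rule key[of S 0 M0 Y0, OF S Moeq0])
      have "(\<integral>\<omega>. (1 - Z \<omega>) * indicator S (X \<omega>, M0 \<omega>) * Y0 \<omega> \<partial>P) =
          (\<integral>\<omega>. indicator {0} (Z \<omega>) * indicator S (X \<omega>, M0 \<omega>) * Y0 \<omega> \<partial>P)"
        using ind0 by (intro Bochner_Integration.integral_cong) auto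
      also have "\<dots> = (\<integral>\<omega>. indicator {0} (Z \<omega>) * indicator S (X \<omega>, M0 \<omega>) * mu (X \<omega>, 0, M0 \<omega>) \<partial>P)" by (rule k)
      also have "\<dots> = (\<integral>\<omega>. (1 - Z \<omega>) * indicator S (X \<omega>, M0 \<omega>) * (\<lambda>p. mu (fst p, 0, snd p)) (X \<omega>, M0 \<omega>) \<partial>P)"
        using ind0 by (intro Bochner_Integration.integral_cong) auto
      finally show "(\<integral>\<omega>. (1 - Z \<omega>) * indicator S (X \<omega>, M0 \<omega>) * Y0 \<omega> \<partial>P) =
          (\<integral>\<omega>. (1 - Z \<omega>) * indicator S (X \<omega>, M0 \<omega>) * (\<lambda>p. mu (fst p, 0, snd p)) (X \<omega>, M0 \<omega>) \<partial>P)" .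
    qed
    then show ?thesis by simp
  qed
  have g1i: "integrable P (\<lambda>\<omega>. g1 (X \<omega>, M1 \<omega>))" and g1m: "g1 \<in> borel_measurable borel"
    using g1a unfolding cond_exp_version_def by auto
  have g0i: "integrable P (\<lambda>\<omega>. g0 (X \<omega>, M0 \<omega>))" and g0m: "g0 \<in> borel_measurable borel"
    using g0a unfolding cond_exp_version_def by auto
  have mu1i: "integrable P (\<lambda>\<omega>. mu (X \<omega>, 1, M1 \<omega>))"
  proof (subst integrable_cong_AE[OF _ _ B1])
    show "(\<lambda>\<omega>. mu (X \<omega>, 1, M1 \<omega>)) \<in> borel_measurable P" by measurable
    show "(\<lambda>\<omega>. g1 (X \<omega>, M1 \<omega>)) \<in> borel_measurable P" using g1i by auto
  qed (rule g1i)
  have mu0i: "integrable P (\<lambda>\<omega>. mu (X \<omega>, 0, M0 \<omega>))"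
  proof (subst integrable_cong_AE[OF _ _ B0])
    show "(\<lambda>\<omega>. mu (X \<omega>, 0, M0 \<omega>)) \<in> borel_measurable P" by measurable
    show "(\<lambda>\<omega>. g0 (X \<omega>, M0 \<omega>)) \<in> borel_measurable P" using g0i by auto
  qed (rule g0i)
  have Mom[measurable]: "Mo \<in> borel_measurable P" unfolding Mo_def by measurable
  have A1r: "AE \<omega> in P. AE m in lborel. fobs (X \<omega>, 1) m = fM1 (X \<omega>) m"
  proof (rule stepA[OF P X_meas Z_meas Mom M1_meas _ _ qm _ qpos _ fobs_dens[folded Mo_def] fM1_dens])
    show "\<forall>\<omega>\<in>space P. Z \<omega> = indicator {1} (Z \<omega>)" using ind1 by simp
    show "\<forall>\<omega>\<in>space P. Z \<omega> = 1 \<longrightarrow> Mo \<omega> = M1 \<omega>" using Moeq1 by simp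
    show "\<And>x. 0 \<le> q x" using q01 by simp
    show "\<And>\<phi>. \<phi> \<in> borel_measurable borel \<Longrightarrow> (\<integral>\<^sup>+\<omega>. ennreal (Z \<omega>) * \<phi> (X \<omega>, M1 \<omega>) \<partial>P) = (\<integral>\<^sup>+\<omega>. ennreal (q (X \<omega>)) * \<phi> (X \<omega>, M1 \<omega>) \<partial>P)"
      by (rule DN1)
  qed
  have A0r: "AE \<omega> in P. AE m in lborel. fobs (X \<omega>, 0) m = fM0 (X \<omega>) m"
  proof (rule stepA[where Zt="\<lambda>\<omega>. 1 - Z \<omega>" and qt="\<lambda>x. 1 - q x", OF P X_meas Z_meas Mom M0_meas _ _ _ _ _ _ fobs_dens[folded Mo_def] fM0_dens])
    show "\<forall>\<omega>\<in>space P. 1 - Z \<omega> = indicator {0} (Z \<omega>)" using ind0 by simp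
    show "\<forall>\<omega>\<in>space P. Z \<omega> = 0 \<longrightarrow> Mo \<omega> = M0 \<omega>" using Moeq0 by simp
    show "(\<lambda>x. 1 - q x) \<in> borel_measurable borel" by measurable
    show "\<And>x. 0 \<le> 1 - q x" using q01 by simp
    show "AE \<omega> in P. 0 < 1 - q (X \<omega>)" using qlt by eventually_elim simp
    show "\<And>\<phi>. \<phi> \<in> borel_measurable borel \<Longrightarrow> (\<integral>\<^sup>+\<omega>. ennreal (1 - Z \<omega>) * \<phi> (X \<omega>, M0 \<omega>) \<partial>P) = (\<integral>\<^sup>+\<omega>. ennreal (1 - q (X \<omega>)) * \<phi> (X \<omega>, M0 \<omega>) \<partial>P)"
      by (rule DN0)
  qed
  have fom: "(\<lambda>(v, w). fobs v w) \<in> borel_measurable borel" and fo0: "\<And>v w. 0 \<le> fobs v w"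
    using fobs_dens unfolding cond_density_version_def by auto
  have f1m: "(\<lambda>(v, w). fM1 v w) \<in> borel_measurable borel"
    using fM1_dens unfolding cond_density_version_def by auto
  have f0m: "(\<lambda>(v, w). fM0 v w) \<in> borel_measurable borel"
    using fM0_dens unfolding cond_density_version_def by auto
  have em: "(\<lambda>(v, w). e v w) \<in> borel_measurable borel"
    using e_dens unfolding cond_density_version_def by auto
  have cm: "(\<lambda>(s, t). c s t) \<in> borel_measurable borel" using copula unfolding copula_density_def by auto
  have Km[measurable]: "(\<lambda>u. kern_u K h ustar u) \<in> borel_measurable borel" by (rule kern_meas[OF K])
  obtain C where kb: "\<And>u. \<bar>kern_u K h ustar u\<bar> \<le> C" using kern_bound[OF K] by blast
  define CE where "CE p = copula_e c (\<lambda>x. fobs (x, 1)) (\<lambda>x. fobs (x, 0)) (fst p) (snd p)" for p :: "(real^'d) \<times> real \<times> real"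
  have CEm: "CE \<in> borel_measurable borel" unfolding CE_def by (rule CE_meas[OF fom cm])
  define mud where "mud p = mu (fst p, 1, fst (snd p)) - mu (fst p, 0, snd (snd p))" for p :: "(real^'d) \<times> real \<times> real"
  have mudm: "mud \<in> borel_measurable borel"
  proof -
    note [measurable (raw)] = borel_measurable_fst_comp borel_measurable_snd_comp
    note [measurable] = borel_measurable_id_prod
    have a: "(\<lambda>p::(real^'d) \<times> real \<times> real. (fst p, 1::real, fst (snd p))) \<in> borel_measurable borel" by measurable
    have b: "(\<lambda>p::(real^'d) \<times> real \<times> real. (fst p, 0::real, snd (snd p))) \<in> borel_measurable borel" by measurable
    show ?thesis unfolding mud_def
      by (rule borel_measurable_diff[OF measurable_compose[OF a mum] measurable_compose[OF b mum]])
  qed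
  have ksm: "(\<lambda>p::(real^'d) \<times> real \<times> real. kern_u K h ustar (snd p)) \<in> borel_measurable borel"
    by (rule measurable_compose[OF borel_measurable_snd_comp[OF borel_measurable_id_prod] Km])
  have emp: "(\<lambda>p::(real^'d) \<times> real \<times> real. e (fst p) (snd p)) \<in> borel_measurable borel"
    using em by (simp add: case_prod_beta')
  define FN where "FN p = mud p * kern_u K h ustar (snd p)" for p
  define FD where "FD p = kern_u K h ustar (snd p)" for p :: "(real^'d) \<times> real \<times> real"
  have FNm: "FN \<in> borel_measurable borel" unfolding FN_def by (rule borel_measurable_times[OF mudm ksm])
  have FDm: "FD \<in> borel_measurable borel" unfolding FD_def by (rule ksm)
  have U_meas: "(\<lambda>\<omega>. (M1 \<omega>, M0 \<omega>)) \<in> borel_measurable P" by measurable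
  have kUm: "(\<lambda>\<omega>. kern_u K h ustar (M1 \<omega>, M0 \<omega>)) \<in> borel_measurable P"
    by (rule measurable_compose[OF U_meas Km])
  have intD: "integrable P (\<lambda>\<omega>. FD (X \<omega>, (M1 \<omega>, M0 \<omega>)))"
    unfolding FD_def by (rule integrable_const_bound[where B=C]) (use kb kUm in simp_all)
  have intN: "integrable P (\<lambda>\<omega>. FN (X \<omega>, (M1 \<omega>, M0 \<omega>)))"
  proof -
    have "integrable P (\<lambda>\<omega>. (mu (X \<omega>, 1, M1 \<omega>) - mu (X \<omega>, 0, M0 \<omega>)) * kern_u K h ustar (M1 \<omega>, M0 \<omega>))"
    proof (rule Bochner_Integration.integrable_bound)
      show "integrable P (\<lambda>\<omega>. C * (mu (X \<omega>, 1, M1 \<omega>) - mu (X \<omega>, 0, M0 \<omega>)))"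
        using mu1i mu0i by simp
      show "(\<lambda>\<omega>. (mu (X \<omega>, 1, M1 \<omega>) - mu (X \<omega>, 0, M0 \<omega>)) * kern_u K h ustar (M1 \<omega>, M0 \<omega>)) \<in> borel_measurable P"
        using kUm by measurable
      show "AE \<omega> in P. norm ((mu (X \<omega>, 1, M1 \<omega>) - mu (X \<omega>, 0, M0 \<omega>)) * kern_u K h ustar (M1 \<omega>, M0 \<omega>)) \<le>
          norm (C * (mu (X \<omega>, 1, M1 \<omega>) - mu (X \<omega>, 0, M0 \<omega>)))"
      proof (rule AE_I2)
        fix \<omega>
        have "\<bar>mu (X \<omega>, 1, M1 \<omega>) - mu (X \<omega>, 0, M0 \<omega>)\<bar> * \<bar>kern_u K h ustar (M1 \<omega>, M0 \<omega>)\<bar> \<le>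
              \<bar>mu (X \<omega>, 1, M1 \<omega>) - mu (X \<omega>, 0, M0 \<omega>)\<bar> * \<bar>C\<bar>"
          using kb[of "(M1 \<omega>, M0 \<omega>)"] by (intro mult_left_mono) auto
        then show "norm ((mu (X \<omega>, 1, M1 \<omega>) - mu (X \<omega>, 0, M0 \<omega>)) * kern_u K h ustar (M1 \<omega>, M0 \<omega>)) \<le>
          norm (C * (mu (X \<omega>, 1, M1 \<omega>) - mu (X \<omega>, 0, M0 \<omega>)))" by (simp add: abs_mult mult_ac)
      qed
    qed
    then show ?thesis by (simp add: FN_def mud_def)
  qed
  have eqN: "(\<integral>\<omega>. FN (X \<omega>, (M1 \<omega>, M0 \<omega>)) \<partial>P) = (\<integral>\<omega>. (\<integral>w. e (X \<omega>) w * FN (X \<omega>, w) \<partial>lborel) \<partial>P)"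
    by (rule cond_density_integral[OF P e_dens FNm intN])
  have eqD: "(\<integral>\<omega>. FD (X \<omega>, (M1 \<omega>, M0 \<omega>)) \<partial>P) = (\<integral>\<omega>. (\<integral>w. e (X \<omega>) w * FD (X \<omega>, w) \<partial>lborel) \<partial>P)"
    by (rule cond_density_integral[OF P e_dens FDm intD])
  have s1m: "(\<lambda>p. fobs (fst p, z) (snd p)) \<in> borel_measurable (borel \<Otimes>\<^sub>M lborel)" for z
    by (rule meas_slice2[OF fom])
  have AEce: "AE \<omega> in P. AE u in lborel. CE (X \<omega>, u) = e (X \<omega>) u"
    using A1r A0r AE_space
  proof eventually_elim
    case (elim \<omega>)
    have Xin: "X \<omega> \<in> Xset" using X_in elim by auto
    have cdf_eq: "cond_cdf (\<lambda>x. fobs (x, z)) (X \<omega>) m = cond_cdf fMz (X \<omega>) m"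
      if ae: "AE m in lborel. fobs (X \<omega>, z) m = fMz (X \<omega>) m" and fzm: "(\<lambda>(v, w). fMz v w) \<in> borel_measurable borel"
      for z m and fMz :: "real^'d \<Rightarrow> real \<Rightarrow> real"
    proof -
      have a: "(\<lambda>t. fobs (X \<omega>, z) t) \<in> borel_measurable lborel"
        using slice_meas(2)[of "\<lambda>x. fobs (x, z)", OF s1m[of z]] by simp
      have b: "fMz (X \<omega>) \<in> borel_measurable lborel"
        using slice_meas(2)[OF meas_slice1[OF fzm]] by simp
      show ?thesis unfolding cond_cdf_def
        by (rule integral_cong_AE) (use a b ae in auto)
    qed
    have c1: "\<And>m. cond_cdf (\<lambda>x. fobs (x, 1)) (X \<omega>) m = cond_cdf fM1 (X \<omega>) m"
      by (rule cdf_eq[OF _ f1m]) (use elim in simp)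
    have c0: "\<And>m. cond_cdf (\<lambda>x. fobs (x, 0)) (X \<omega>) m = cond_cdf fM0 (X \<omega>) m"
      by (rule cdf_eq[OF _ f0m]) (use elim in simp)
    have u1: "AE u in (lborel :: (real \<times> real) measure). fobs (X \<omega>, 1) (fst u) = fM1 (X \<omega>) (fst u)"
      by (rule AE_fst_lborel) (use elim in simp)
    have u0: "AE u in (lborel :: (real \<times> real) measure). fobs (X \<omega>, 0) (snd u) = fM0 (X \<omega>) (snd u)"
      by (rule AE_snd_lborel) (use elim in simp)
    show ?case using u1 u0
    proof eventually_elim
      case (elim u)
      have "e (X \<omega>) u = copula_e c fM1 fM0 (X \<omega>) u" using A3 Xin by blast
      then show ?case using elim c1 c0 by (simp add: CE_def copula_e_def)
    qed
  qed
  have GNm: "(\<lambda>p. mud p * CE p * kern_u K h ustar (snd p)) \<in> borel_measurable borel"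
    by (intro borel_measurable_times mudm CEm ksm)
  have GDm: "(\<lambda>p. CE p * kern_u K h ustar (snd p)) \<in> borel_measurable borel"
    by (intro borel_measurable_times CEm ksm)
  have HNm: "(\<lambda>p. e (fst p) (snd p) * FN p) \<in> borel_measurable borel"
    by (intro borel_measurable_times emp FNm)
  have HDm: "(\<lambda>p. e (fst p) (snd p) * FD p) \<in> borel_measurable borel"
    by (intro borel_measurable_times emp FDm)
  have RN: "(\<integral>\<omega>. (\<integral>w. e (X \<omega>) w * FN (X \<omega>, w) \<partial>lborel) \<partial>P) =
      (\<integral>\<omega>. (\<integral>u. mud (X \<omega>, u) * CE (X \<omega>, u) * kern_u K h ustar u \<partial>lborel) \<partial>P)"
  proof (rule integral_cong_AE)
    show "(\<lambda>\<omega>. \<integral>w. e (X \<omega>) w * FN (X \<omega>, w) \<partial>lborel) \<in> borel_measurable P"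
      using inner_meas(1)[OF HNm X_meas] by simp
    show "(\<lambda>\<omega>. \<integral>u. mud (X \<omega>, u) * CE (X \<omega>, u) * kern_u K h ustar u \<partial>lborel) \<in> borel_measurable P"
      using inner_meas(1)[OF GNm X_meas] by simp
    show "AE \<omega> in P. (\<integral>w. e (X \<omega>) w * FN (X \<omega>, w) \<partial>lborel) = (\<integral>u. mud (X \<omega>, u) * CE (X \<omega>, u) * kern_u K h ustar u \<partial>lborel)"
      using AEce
    proof eventually_elim
      case (elim \<omega>)
      show ?case
      proof (rule integral_cong_AE)
        show "(\<lambda>w. e (X \<omega>) w * FN (X \<omega>, w)) \<in> borel_measurable lborel"
          using inner_meas(2)[OF HNm X_meas, where x="X \<omega>"] by simp
        show "(\<lambda>u. mud (X \<omega>, u) * CE (X \<omega>, u) * kern_u K h ustar u) \<in> borel_measurable lborel"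
          using inner_meas(2)[OF GNm X_meas, where x="X \<omega>"] by simp
        show "AE u in lborel. e (X \<omega>) u * FN (X \<omega>, u) = mud (X \<omega>, u) * CE (X \<omega>, u) * kern_u K h ustar u"
          using elim by eventually_elim (simp add: FN_def mult_ac)
      qed
    qed
  qed
  have RD: "(\<integral>\<omega>. (\<integral>w. e (X \<omega>) w * FD (X \<omega>, w) \<partial>lborel) \<partial>P) =
      (\<integral>\<omega>. (\<integral>u. CE (X \<omega>, u) * kern_u K h ustar u \<partial>lborel) \<partial>P)"
  proof (rule integral_cong_AE)
    show "(\<lambda>\<omega>. \<integral>w. e (X \<omega>) w * FD (X \<omega>, w) \<partial>lborel) \<in> borel_measurable P"
      using inner_meas(1)[OF HDm X_meas] by simp
    show "(\<lambda>\<omega>. \<integral>u. CE (X \<omega>, u) * kern_u K h ustar u \<partial>lborel) \<in> borel_measurable P"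
      using inner_meas(1)[OF GDm X_meas] by simp
    show "AE \<omega> in P. (\<integral>w. e (X \<omega>) w * FD (X \<omega>, w) \<partial>lborel) = (\<integral>u. CE (X \<omega>, u) * kern_u K h ustar u \<partial>lborel)"
      using AEce
    proof eventually_elim
      case (elim \<omega>)
      show ?case
      proof (rule integral_cong_AE)
        show "(\<lambda>w. e (X \<omega>) w * FD (X \<omega>, w)) \<in> borel_measurable lborel"
          using inner_meas(2)[OF HDm X_meas, where x="X \<omega>"] by simp
        show "(\<lambda>u. CE (X \<omega>, u) * kern_u K h ustar u) \<in> borel_measurable lborel"
          using inner_meas(2)[OF GDm X_meas, where x="X \<omega>"] by simp
        show "AE u in lborel. e (X \<omega>) u * FD (X \<omega>, u) = CE (X \<omega>, u) * kern_u K h ustar u"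
          using elim by eventually_elim (simp add: FD_def mult_ac)
      qed
    qed
  qed
  have LN: "(\<integral>\<omega>. (mu (X \<omega>, 1, M1 \<omega>) - mu (X \<omega>, 0, M0 \<omega>)) * kern_u K h ustar (M1 \<omega>, M0 \<omega>) \<partial>P) =
     (\<integral>\<omega>. FN (X \<omega>, (M1 \<omega>, M0 \<omega>)) \<partial>P)" by (simp add: FN_def mud_def)
  have LD: "(\<integral>\<omega>. kern_u K h ustar (M1 \<omega>, M0 \<omega>) \<partial>P) = (\<integral>\<omega>. FD (X \<omega>, (M1 \<omega>, M0 \<omega>)) \<partial>P)"
    by (simp add: FD_def)
  show ?thesis
    unfolding LN LD eqN eqD RN RD by (simp add: CE_def mud_def)
qed

end
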